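(* In the algorithm setup, let $i$ be a variable, $b\in\partial i$ a factor, $1\le\ell\le L$, and $s_j\ge0$ integers for $j\in\partial b\setminus\{i\}$. Then $$\mathbb E\Big[\prod_{j\in\partial b\setminus i}(u^\ell_{j\to b})^{s_j}\,\Big|\,\mathcal G_i^\ell\Big]=\prod_{j\in\partial b\setminus i}\mathbb E\big[(u^\ell_{j\to b})^{s_j}\,\big|\,\mathcal G_i^\ell\big].$$
   Context: Algorithm setup. Fix $r\ge2$ and a predicate $f:\{\pm1\}^r\to\{0,1\}$, identified with its multilinear extension $f(x)=\sum_{S\subseteq[r]}\hat f(S)\prod_{\iota\in S}x_\iota$ on $\mathbb R^r$, and assume $\hat f(S)=0$ whenever $|S|=1$. Fix $\delta>0$ and let $L=\lfloor1/\delta\rfloor$. Let $G=(V,E)$ be a hypergraph whose hyperedges (factors) $a$ are ordered $r$-tuples $\partial a=(v_{a,1},\dots,v_{a,r})$ of distinct vertices (variables), which is $d$-index-regular: every variable lies in exactly $d$ factors, and for each $\iota\in[r]$ it is the $\iota$-th entry of exactly $d/r$ factors. Write $\partial i$ for the set of factors containing $i$. Assume the bipartite variable–factor incidence graph (factor graph) of $G$ has no cycle of length less than $4L+4$. For a factor $a$ and $j\in\partial a$, $\mathsf D_{j;a}f$ is the partial derivative of (multilinear) $f$ in the coordinate $\iota$ with $v_{a,\iota}=j$. Fix $K>0$ and functions $F_{\to,\ell},F_\ell:\mathbb R^\ell\to[-K,K]$ for $0\le\ell\le L-1$ (constants when $\ell=0$). Randomness: $z_i^0$, $i\in V$, i.i.d.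 $\mathcal N(0,\delta)$; set $z^0_{i\to a}=z_i^0$, $w_i^0=w^0_{i\to a}=0$. For $\ell=0,\dots,L-1$: $A^\ell_{i\to a}=F_{\to,\ell}(u^1_{i\to a},\dots,u^\ell_{i\to a})$; with $\mathbf z^\ell_{\partial b\to b}=(z^\ell_{v_{b,1}\to b},\dots,z^\ell_{v_{b,r}\to b})$, $w^{\ell+1}_{i\to a}=(d-1)^{-1/2}\sum_{b\in\partial i\setminus a}\mathsf D_{i;b}f(\mathbf z^\ell_{\partial b\to b})$, $u^{\ell+1}_{i\to a}=w^{\ell+1}_{i\to a}-w^\ell_{i\to a}$, $z^{\ell+1}_{i\to a}=z_i^0+\sum_{s=1}^{\ell+1}A^{s-1}_{i\to a}u^s_{i\to a}$. Sigma-algebras: the distance between variables $i,j$ is the least $k$ such that there are variables $i=v_0,\dots,v_k=j$ with consecutive ones sharing a factor. $\mathsf B_i(\ell)$ is the set of variables at distance $\le\ell$ from $i$; $\mathcal G_i^\ell=\sigma(z_j^0:j\in\mathsf B_i(\ell))$. *)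

theory Defs
  imports "HOL-Probability.Probability"
begin

text \<open>A factor a has ordered vertex tuple (vx a 0, ..., vx a (r-1)) (0-indexed).\<close>

definition vset :: "('a \<Rightarrow> nat \<Rightarrow> 'v) \<Rightarrow> nat \<Rightarrow> 'a \<Rightarrow> 'v set" where
  "vset vx r a = vx a ` {..<r}"

definition fdeg :: "'a set \<Rightarrow> ('a \<Rightarrow> nat \<Rightarrow> 'v) \<Rightarrow> nat \<Rightarrow> 'v \<Rightarrow> 'a set" where
  "fdeg E vx r i = {a \<in> E. i \<in> vset vx r a}"

definition pos :: "('a \<Rightarrow> nat \<Rightarrow> 'v) \<Rightarrow> nat \<Rightarrow> 'a \<Rightarrow> 'v \<Rightarrow> nat" where
  "pos vx r b j = (THE \<iota>. \<iota> < r \<and> vx b \<iota> = j)"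

text \<open>The factor graph has no cycle of length (2k) less than n.
  A cycle of length 2k (k >= 2) alternates k distinct variables and k distinct factors.\<close>
definition no_short_cycle :: "'a set \<Rightarrow> ('a \<Rightarrow> nat \<Rightarrow> 'v) \<Rightarrow> nat \<Rightarrow> nat \<Rightarrow> bool" where
  "no_short_cycle E vx r n \<longleftrightarrow>
     \<not> (\<exists>k vs fs. 2 \<le> k \<and> 2 * k < n \<and> length vs = k \<and> length fs = k \<and>
          distinct vs \<and> distinct fs \<and> set fs \<subseteq> E \<and>
          (\<forall>t<k. vs ! t \<in> vset vx r (fs ! t) \<and> vs ! ((t + 1) mod k) \<in> vset vx r (fs ! t)))"

definition adjv :: "'a set \<Rightarrow> ('a \<Rightarrow> nat \<Rightarrow> 'v) \<Rightarrow> nat \<Rightarrow> 'v \<Rightarrow> 'v \<Rightarrow> bool" where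
  "adjv E vx r j k \<longleftrightarrow> (\<exists>a\<in>E. j \<in> vset vx r a \<and> k \<in> vset vx r a)"

definition vball :: "'v set \<Rightarrow> 'a set \<Rightarrow> ('a \<Rightarrow> nat \<Rightarrow> 'v) \<Rightarrow> nat \<Rightarrow> 'v \<Rightarrow> nat \<Rightarrow> 'v set" where
  "vball V E vx r i l = {j \<in> V. \<exists>k\<le>l. (adjv E vx r ^^ k) i j}"

definition cube :: "nat \<Rightarrow> (nat \<Rightarrow> real) set" where
  "cube r = (\<Pi>\<^sub>E \<iota>\<in>{..<r}. {-1, 1})"

definition fourier :: "nat \<Rightarrow> ((nat \<Rightarrow> real) \<Rightarrow> real) \<Rightarrow> nat set \<Rightarrow> real" where
  "fourier r f S = (\<Sum>x\<in>cube r. f x * (\<Prod>\<iota>\<in>S. x \<iota>)) / 2 ^ r"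

definition mlext :: "nat \<Rightarrow> ((nat \<Rightarrow> real) \<Rightarrow> real) \<Rightarrow> (nat \<Rightarrow> real) \<Rightarrow> real" where
  "mlext r f x = (\<Sum>S\<in>Pow {..<r}. fourier r f S * (\<Prod>\<iota>\<in>S. x \<iota>))"

definition mlderiv :: "nat \<Rightarrow> ((nat \<Rightarrow> real) \<Rightarrow> real) \<Rightarrow> nat \<Rightarrow> (nat \<Rightarrow> real) \<Rightarrow> real" where
  "mlderiv r f \<iota> x = (\<Sum>S\<in>{S\<in>Pow {..<r}. \<iota> \<in> S}. fourier r f S * (\<Prod>\<kappa>\<in>S - {\<iota>}. x \<kappa>))"

text \<open>A history h s i a stores w^s_{i->a} for s up to the current step.\<close>
definition u_of :: "(nat \<Rightarrow> 'v \<Rightarrow> 'a \<Rightarrow> real) \<Rightarrow> nat \<Rightarrow> 'v \<Rightarrow> 'a \<Rightarrow> real" where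
  "u_of h s i a = h s i a - h (s - 1) i a"

text \<open>A^l_{i->a} = F_{->,l}(u^1,...,u^l), with the argument vector indexed 0..l-1.\<close>
definition A_of :: "(nat \<Rightarrow> (nat \<Rightarrow> real) \<Rightarrow> real) \<Rightarrow> (nat \<Rightarrow> 'v \<Rightarrow> 'a \<Rightarrow> real) \<Rightarrow> nat \<Rightarrow> 'v \<Rightarrow> 'a \<Rightarrow> real" where
  "A_of Fto h l i a = Fto l (restrict (\<lambda>k. u_of h (k + 1) i a) {..<l})"

definition z_of :: "('v \<Rightarrow> real) \<Rightarrow> (nat \<Rightarrow> (nat \<Rightarrow> real) \<Rightarrow> real) \<Rightarrow> (nat \<Rightarrow> 'v \<Rightarrow> 'a \<Rightarrow> real)
    \<Rightarrow> nat \<Rightarrow> 'v \<Rightarrow> 'a \<Rightarrow> real" where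
  "z_of z0 Fto h l i a = z0 i + (\<Sum>s\<in>{1..l}. A_of Fto h (s - 1) i a * u_of h s i a)"

primrec whist :: "nat \<Rightarrow> 'a set \<Rightarrow> ('a \<Rightarrow> nat \<Rightarrow> 'v) \<Rightarrow> nat \<Rightarrow> ((nat \<Rightarrow> real) \<Rightarrow> real)
    \<Rightarrow> (nat \<Rightarrow> (nat \<Rightarrow> real) \<Rightarrow> real) \<Rightarrow> ('v \<Rightarrow> real) \<Rightarrow> nat \<Rightarrow> nat \<Rightarrow> 'v \<Rightarrow> 'a \<Rightarrow> real" where
  "whist r E vx d f Fto z0 0 = (\<lambda>s i a. 0)"
| "whist r E vx d f Fto z0 (Suc l) =
     (let h = whist r E vx d f Fto z0 l in
      (\<lambda>s i a. if s \<le> l then h s i a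
        else (1 / sqrt (real d - 1)) *
          (\<Sum>b\<in>fdeg E vx r i - {a}.
             mlderiv r (\<lambda>x. f x) (pos vx r b i) (\<lambda>\<iota>. z_of z0 Fto h l (vx b \<iota>) b))))"

text \<open>u^l_{j->b} as a function of the initial Gaussian vector z0.\<close>
definition umsg :: "nat \<Rightarrow> 'a set \<Rightarrow> ('a \<Rightarrow> nat \<Rightarrow> 'v) \<Rightarrow> nat \<Rightarrow> ((nat \<Rightarrow> real) \<Rightarrow> real)
    \<Rightarrow> (nat \<Rightarrow> (nat \<Rightarrow> real) \<Rightarrow> real) \<Rightarrow> ('v \<Rightarrow> real) \<Rightarrow> nat \<Rightarrow> 'v \<Rightarrow> 'a \<Rightarrow> real" where
  "umsg r E vx d f Fto z0 l j b = u_of (whist r E vx d f Fto z0 l) l j b"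

text \<open>z^0_i i.i.d. N(0, delta): product of normal laws with standard deviation sqrt delta.\<close>
definition gauss_space :: "'v set \<Rightarrow> real \<Rightarrow> ('v \<Rightarrow> real) measure" where
  "gauss_space V \<delta> = (\<Pi>\<^sub>M i\<in>V. density lborel (normal_density 0 (sqrt \<delta>)))"

definition gen_sigma :: "('v \<Rightarrow> real) measure \<Rightarrow> 'v set \<Rightarrow> ('v \<Rightarrow> real) measure" where
  "gen_sigma M B = sigma (space M)
     {(\<lambda>\<omega>. \<omega> j) -` A \<inter> space M | j A. j \<in> B \<and> A \<in> sets borel}"

end

theory Submission
  imports Defs
begin

definition Rch :: "'a set \<Rightarrow> ('a \<Rightarrow> nat \<Rightarrow> 'v) \<Rightarrow> nat \<Rightarrow> 'v \<Rightarrow> nat \<Rightarrow> 'v \<Rightarrow> bool" where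
  "Rch E vx r i n v \<longleftrightarrow> (\<exists>k\<le>n. (adjv E vx r ^^ k) i v)"

lemma Rch_mono: "Rch E vx r i n v \<Longrightarrow> n \<le> m \<Longrightarrow> Rch E vx r i m v"
  unfolding Rch_def by (meson order_trans)

lemma Rch_0: "Rch E vx r i 0 i"
  unfolding Rch_def by auto

lemma Rch_step: "Rch E vx r i n u \<Longrightarrow> c \<in> E \<Longrightarrow> u \<in> vset vx r c \<Longrightarrow> v \<in> vset vx r c
   \<Longrightarrow> Rch E vx r i (Suc n) v"
proof -
  assume "Rch E vx r i n u" "c \<in> E" "u \<in> vset vx r c" "v \<in> vset vx r c"
  then obtain k where k: "k \<le> n" "(adjv E vx r ^^ k) i u" unfolding Rch_def by auto
  have "adjv E vx r u v" using \<open>c \<in> E\<close> \<open>u \<in> vset vx r c\<close> \<open>v \<in> vset vx r c\<close>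
    unfolding adjv_def by auto
  then have "(adjv E vx r ^^ Suc k) i v" by (rule relpowp_Suc_I[OF k(2)])
  then show ?thesis unfolding Rch_def using k(1) by (intro exI[of _ "Suc k"]) auto
qed

lemma Rch_sep: "Rch E vx r i a u \<Longrightarrow> c \<in> E \<Longrightarrow> u \<in> vset vx r c \<Longrightarrow> v \<in> vset vx r c
   \<Longrightarrow> \<not> Rch E vx r i a' v \<Longrightarrow> Suc a \<le> a' \<Longrightarrow> False"
  by (meson Rch_mono Rch_step)

definition iswalk :: "'a set \<Rightarrow> ('a \<Rightarrow> nat \<Rightarrow> 'v) \<Rightarrow> nat \<Rightarrow> (nat \<Rightarrow> 'v) \<Rightarrow> (nat \<Rightarrow> 'a) \<Rightarrow> nat \<Rightarrow> bool" where
  "iswalk E vx r vw cw n \<longleftrightarrow> (\<forall>t<n. cw t \<in> E \<and> vw t \<in> vset vx r (cw t) \<and> vw (Suc t) \<in> vset vx r (cw t))"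

lemma walk_Rch: "iswalk E vx r vw cw n \<Longrightarrow> Rch E vx r i a (vw t) \<Longrightarrow> t + p \<le> n
   \<Longrightarrow> Rch E vx r i (a + p) (vw (t + p))"
proof (induction p)
  case 0 then show ?case by simp
next
  case (Suc p)
  then have "Rch E vx r i (a + p) (vw (t + p))" by simp
  moreover have "t + p < n" using Suc by simp
  ultimately show ?case using Suc(2) unfolding iswalk_def
    by (metis Rch_step add_Suc_right)
qed

primrec Ddep :: "'a set \<Rightarrow> ('a \<Rightarrow> nat \<Rightarrow> 'v) \<Rightarrow> nat \<Rightarrow> nat \<Rightarrow> 'v \<Rightarrow> 'a \<Rightarrow> 'v set" where
  "Ddep E vx r 0 j a = {}"
| "Ddep E vx r (Suc l) j a = Ddep E vx r l j a \<union>
     (\<Union>c\<in>fdeg E vx r j - {a}. \<Union>k\<in>vset vx r c - {j}. insert k (Ddep E vx r l k c))"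

lemma Ddep_walk: "k \<in> Ddep E vx r l j a \<Longrightarrow>
  \<exists>n vw cw. 1 \<le> n \<and> n \<le> l \<and> vw 0 = j \<and> vw n = k \<and> iswalk E vx r vw cw n"
proof (induction l arbitrary: j a)
  case 0 then show ?case by simp
next
  case (Suc l)
  show ?case
  proof (cases "k \<in> Ddep E vx r l j a")
    case True then show ?thesis using Suc.IH by (meson le_Suc_eq)
  next
    case False
    then obtain c k' where c: "c \<in> fdeg E vx r j" "k' \<in> vset vx r c" "k = k' \<or> k \<in> Ddep E vx r l k' c"
      using Suc.prems by auto
    have cE: "c \<in> E" "j \<in> vset vx r c" using c(1) unfolding fdeg_def by auto
    show ?thesis
    proof (cases "k = k'")
      case True
      show ?thesis
        apply (rule exI[of _ 1], rule exI[of _ "\<lambda>t. if t = 0 then j else k"], rule exI[of _ "\<lambda>_. c"])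
        using cE c True unfolding iswalk_def by auto
    next
      case False
      then have "k \<in> Ddep E vx r l k' c" using c by auto
      from Suc.IH[OF this] obtain n vw cw where w: "1 \<le> n" "n \<le> l" "vw 0 = k'" "vw n = k"
        "iswalk E vx r vw cw n" by blast
      define vw' where "vw' = (\<lambda>t. if t = 0 then j else vw (t - 1))"
      define cw' where "cw' = (\<lambda>t. if t = 0 then c else cw (t - 1))"
      have "iswalk E vx r vw' cw' (Suc n)"
        unfolding iswalk_def
      proof (intro allI impI)
        fix t assume t: "t < Suc n"
        show "cw' t \<in> E \<and> vw' t \<in> vset vx r (cw' t) \<and> vw' (Suc t) \<in> vset vx r (cw' t)"
        proof (cases t)
          case 0 then show ?thesis using cE c w unfolding vw'_def cw'_def by auto
        next
          case (Suc t')
          then have "t' < n" using t by simp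
          then show ?thesis using w(5) Suc unfolding iswalk_def vw'_def cw'_def by auto
        qed
      qed
      moreover have "vw' 0 = j" "vw' (Suc n) = k" using w unfolding vw'_def by auto
      ultimately show ?thesis using w by (intro exI[of _ "Suc n"] exI[of _ vw'] exI[of _ cw']) auto
    qed
  qed
qed

lemma Ddep_V: "\<forall>a\<in>E. vset vx r a \<subseteq> V \<Longrightarrow> Ddep E vx r l j a \<subseteq> V"
proof (induction l arbitrary: j a)
  case 0 then show ?case by simp
next
  case (Suc l)
  have "vset vx r c \<subseteq> V" if "c \<in> fdeg E vx r j" for c using that Suc.prems unfolding fdeg_def by auto
  then show ?case using Suc.IH[OF Suc.prems] by (simp, blast)
qed

lemma nsc_from_fun:
  assumes K: "2 \<le> K" "2 * K < N"
    and inj: "inj_on VS {..<K}" "inj_on FS {..<K}"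
    and FE: "\<forall>t<K. FS t \<in> E"
    and lk: "\<forall>t<K. VS t \<in> vset vx r (FS t) \<and> VS ((t + 1) mod K) \<in> vset vx r (FS t)"
  shows "\<not> no_short_cycle E vx r N"
proof -
  let ?vs = "map VS [0..<K]" and ?fs = "map FS [0..<K]"
  have "distinct ?vs" "distinct ?fs" using inj by (simp_all add: distinct_map lessThan_atLeast0)
  moreover have "set ?fs \<subseteq> E" using FE by auto
  moreover have "\<forall>t<K. ?vs ! t \<in> vset vx r (?fs ! t) \<and> ?vs ! ((t + 1) mod K) \<in> vset vx r (?fs ! t)"
    using lk K by auto
  ultimately show ?thesis unfolding no_short_cycle_def using K
    by (intro notI) (metis length_map length_upt diff_zero)
qed

lemma gen_cycle:
  assumes EE: "b \<in> E" "X \<in> E" "\<forall>t<m. cw t \<in> E" "\<forall>t<m'. cw' t \<in> E"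
    and lk: "\<forall>t<m. vw t \<in> vset vx r (cw t) \<and> vw (Suc t) \<in> vset vx r (cw t)"
      "\<forall>t<m'. vw' t \<in> vset vx r (cw' t) \<and> vw' (Suc t) \<in> vset vx r (cw' t)"
      "vw m \<in> vset vx r X" "vw' m' \<in> vset vx r X" "vw 0 \<in> vset vx r b" "vw' 0 \<in> vset vx r b"
    and dv: "inj_on vw {..m}" "inj_on vw' {..m'}" "\<forall>t\<le>m. \<forall>t'\<le>m'. vw t \<noteq> vw' t'"
    and df: "inj_on cw {..<m}" "inj_on cw' {..<m'}" "\<forall>t<m. \<forall>t'<m'. cw t \<noteq> cw' t'"
      "\<forall>t<m. X \<noteq> cw t" "\<forall>t<m'. X \<noteq> cw' t" "\<forall>t<m. b \<noteq> cw t" "\<forall>t<m'. b \<noteq> cw' t" "X \<noteq> b"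
    and sz: "2 * (m + m' + 2) < N"
  shows "\<not> no_short_cycle E vx r N"
proof -
  define K where "K = m + m' + 2"
  define VS where "VS t = (if t \<le> m then vw t else vw' (m + m' + 1 - t))" for t
  define FS where "FS t = (if t < m then cw t else if t = m then X else if t \<le> m + m' then cw' (m + m' - t) else b)" for t
  show ?thesis
  proof (rule nsc_from_fun[of K N VS FS])
    show "2 \<le> K" "2 * K < N" using sz unfolding K_def by auto
    show "inj_on VS {..<K}"
    proof (rule inj_onI)
      fix t1 t2 assume t: "t1 \<in> {..<K}" "t2 \<in> {..<K}" "VS t1 = VS t2"
      show "t1 = t2"
      proof (cases "t1 \<le> m")
        case True note t1 = this
        show ?thesis
        proof (cases "t2 \<le> m")
          case True then show ?thesis using t1 t dv(1) unfolding VS_def inj_on_def by auto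
        next
          case False
          have "m + m' + 1 - t2 \<le> m'" using False by auto
          moreover have "vw t1 = vw' (m + m' + 1 - t2)" using t1 False t unfolding VS_def by auto
          ultimately show ?thesis using t1 dv(3) by auto
        qed
      next
        case False note t1 = this
        show ?thesis
        proof (cases "t2 \<le> m")
          case True
          have "m + m' + 1 - t1 \<le> m'" using t1 by auto
          moreover have "vw t2 = vw' (m + m' + 1 - t1)" using t1 True t unfolding VS_def by auto
          ultimately show ?thesis using True dv(3) by auto
        next
          case False
          then have "vw' (m + m' + 1 - t1) = vw' (m + m' + 1 - t2)" using t1 t unfolding VS_def by auto
          moreover have "m + m' + 1 - t1 \<le> m'" "m + m' + 1 - t2 \<le> m'" using t1 False by auto
          ultimately have "m + m' + 1 - t1 = m + m' + 1 - t2" using dv(2) unfolding inj_on_def by auto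
          then show ?thesis using t unfolding K_def by auto
        qed
      qed
    qed
    show "inj_on FS {..<K}"
    proof -
      have A: "FS t = cw t" if "t < m" for t using that unfolding FS_def by auto
      have B: "FS m = X" unfolding FS_def by auto
      have C: "FS t = cw' (m + m' - t) \<and> m + m' - t < m'" if "m < t" "t \<le> m + m'" for t
        using that unfolding FS_def by auto
      have D: "FS (m + m' + 1) = b" unfolding FS_def by auto
      have cs: "t < m \<or> t = m \<or> (m < t \<and> t \<le> m + m') \<or> t = m + m' + 1" if "t < K" for t
        using that unfolding K_def by linarith
      have lt: "FS t1 \<noteq> FS t2" if "t1 < t2" "t2 < K" for t1 t2
      proof -
        have "t1 < K" using that by simp
        from cs[OF this] show ?thesis
        proof (elim disjE)
          assume h1: "t1 < m"
          from cs[OF that(2)] show ?thesis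
          proof (elim disjE)
            assume "t2 < m" then show ?thesis using h1 that A df(1) unfolding inj_on_def by fastforce
          next
            assume "t2 = m" then show ?thesis using h1 A B df(4) by auto
          next
            assume "m < t2 \<and> t2 \<le> m + m'" then show ?thesis using h1 A C[of t2] df(3) by auto
          next
            assume "t2 = m + m' + 1" then show ?thesis using h1 A D df(6) by auto
          qed
        next
          assume h1: "t1 = m"
          from cs[OF that(2)] show ?thesis
          proof (elim disjE)
            assume "m < t2 \<and> t2 \<le> m + m'" then show ?thesis using h1 B C[of t2] df(5) by auto
          next
            assume "t2 = m + m' + 1" then show ?thesis using h1 B D df(8) by auto
          qed (use that h1 in auto)
        next
          assume h1: "m < t1 \<and> t1 \<le> m + m'"
          from cs[OF that(2)] show ?thesis
          proof (elim disjE)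
            assume h2: "m < t2 \<and> t2 \<le> m + m'"
            have "m + m' - t1 \<noteq> m + m' - t2" using h1 h2 that by auto
            then show ?thesis using h1 h2 C[of t1] C[of t2] df(2) unfolding inj_on_def by auto
          next
            assume "t2 = m + m' + 1" then show ?thesis using h1 C[of t1] D df(7) by auto
          qed (use that h1 in auto)
        next
          assume h1: "t1 = m + m' + 1"
          then show ?thesis using that unfolding K_def by auto
        qed
      qed
      show ?thesis unfolding inj_on_def
        by (metis lessThan_iff linorder_neqE_nat lt)
    qed
    show "\<forall>t<K. FS t \<in> E" using EE unfolding FS_def by auto
    show "\<forall>t<K. VS t \<in> vset vx r (FS t) \<and> VS ((t + 1) mod K) \<in> vset vx r (FS t)"
    proof (intro allI impI)
      fix t assume tK: "t < K"
      consider "t < m" | "t = m" | "m < t" "t \<le> m + m'" | "t = m + m' + 1" using tK unfolding K_def by linarith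
      then show "VS t \<in> vset vx r (FS t) \<and> VS ((t + 1) mod K) \<in> vset vx r (FS t)"
      proof cases
        case 1 then show ?thesis using lk(1) unfolding VS_def FS_def K_def by auto
      next
        case 2 then show ?thesis using lk(3,4) unfolding VS_def FS_def K_def by auto
      next
        case 3
        define u where "u = m + m' - t"
        have u: "u < m'" "m + m' - t = u" "m + m' + 1 - t = Suc u" using 3 unfolding u_def by auto
        have "(t + 1) mod K = t + 1" using 3 unfolding K_def by auto
        then show ?thesis using 3 u lk(2) unfolding VS_def FS_def K_def by auto
      next
        case 4
        have "(t + 1) mod K = 0" using 4 unfolding K_def by auto
        then show ?thesis using 4 lk(5,6) unfolding VS_def FS_def K_def by auto
      qed
    qed
  qed
qed

lemma lev_eq:
  assumes "Rch E vx r i (Suc t) x" "\<not> Rch E vx r i t x" "Rch E vx r i (Suc t') x" "\<not> Rch E vx r i t' x"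
  shows "t = t'"
proof (rule ccontr)
  assume "t \<noteq> t'"
  then consider "Suc t \<le> t'" | "Suc t' \<le> t" by linarith
  then show False
  proof cases
    case 1 then show False using Rch_mono[OF assms(1) 1] assms(4) by simp
  next
    case 2 then show False using Rch_mono[OF assms(3) 2] assms(2) by simp
  qed
qed

lemma fac_eq:
  assumes "c \<in> E" "u \<in> vset vx r c" "Rch E vx r i (Suc t) u" "v \<in> vset vx r c" "\<not> Rch E vx r i (Suc t) v"
    "u' \<in> vset vx r c" "Rch E vx r i (Suc t') u'" "v' \<in> vset vx r c" "\<not> Rch E vx r i (Suc t') v'"
  shows "t = t'"
proof (rule ccontr)
  assume "t \<noteq> t'"
  then consider "Suc t < Suc t'" | "Suc t' < Suc t" by linarith
  then show False
  proof cases
    case 1 then show False using Rch_sep[OF assms(3,1,2,8,9)] by simp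
  next
    case 2 then show False using Rch_sep[OF assms(7,1,6,4,5)] by simp
  qed
qed

lemma fac_b:
  assumes "c \<in> E" "i \<in> vset vx r c" "v \<in> vset vx r c" "\<not> Rch E vx r i (Suc t) v"
  shows False
  using Rch_sep[OF Rch_0 assms] by simp

lemma geod:
  assumes b: "b \<in> E" "i \<in> vset vx r b" "j \<in> vset vx r b"
    and w: "iswalk E vx r vw cw n" "vw 0 = j" "n \<le> l" "\<not> Rch E vx r i l (vw n)"
  shows "n = l" "\<forall>t\<le>n. Rch E vx r i (Suc t) (vw t) \<and> \<not> Rch E vx r i t (vw t)"
proof -
  have R1: "Rch E vx r i 1 (vw 0)" using Rch_step[OF Rch_0 b(1) b(2) b(3)] w(2) by simp
  have up: "Rch E vx r i (Suc t) (vw t)" if "t \<le> n" for t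
    using walk_Rch[OF w(1) R1, of t] that by simp
  show "n = l"
  proof (rule ccontr)
    assume "n \<noteq> l"
    then have "Suc n \<le> l" using w(3) by simp
    then show False using Rch_mono[OF up[of n] \<open>Suc n \<le> l\<close>] w(4) by simp
  qed
  show "\<forall>t\<le>n. Rch E vx r i (Suc t) (vw t) \<and> \<not> Rch E vx r i t (vw t)"
  proof (intro allI impI conjI)
    fix t assume t: "t \<le> n"
    show "Rch E vx r i (Suc t) (vw t)" using up[OF t] .
    show "\<not> Rch E vx r i t (vw t)"
    proof
      assume "Rch E vx r i t (vw t)"
      from walk_Rch[OF w(1) this, of "n - t"] t have Rn: "Rch E vx r i n (vw n)" by simp
      show False using Rch_mono[OF Rn w(3)] w(4) by simp
    qed
  qed
qed

lemma two_walks_False: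
  assumes b: "b \<in> E" "i \<in> vset vx r b" "j \<in> vset vx r b" "j' \<in> vset vx r b" "j \<noteq> j'"
    and w1: "iswalk E vx r vw cw l" "vw 0 = j" "\<forall>t\<le>l. Rch E vx r i (Suc t) (vw t) \<and> \<not> Rch E vx r i t (vw t)"
    and w2: "iswalk E vx r vw' cw' l" "vw' 0 = j'" "\<forall>t\<le>l. Rch E vx r i (Suc t) (vw' t) \<and> \<not> Rch E vx r i t (vw' t)"
    and eq: "vw l = vw' l" and LL: "l \<le> L" and nsc: "no_short_cycle E vx r (4 * L + 4)"
  shows False
proof -
  note F1 = w1(1)[unfolded iswalk_def, rule_format] and F2 = w2(1)[unfolded iswalk_def, rule_format]
  note L1 = w1(3)[rule_format] and L2 = w2(3)[rule_format]
  have VV: "t = t'" if "t \<le> l" "t' \<le> l" "vw t = vw' t'" for t t'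
    using lev_eq[of E vx r i t "vw t" t'] L1[OF that(1)] L2[OF that(2)] that(3) by auto
  have VV1: "t = t'" if "t \<le> l" "t' \<le> l" "vw t = vw t'" for t t'
    using lev_eq[of E vx r i t "vw t" t'] L1[OF that(1)] L1[OF that(2)] that(3) by auto
  have VV2: "t = t'" if "t \<le> l" "t' \<le> l" "vw' t = vw' t'" for t t'
    using lev_eq[of E vx r i t "vw' t" t'] L2[OF that(1)] L2[OF that(2)] that(3) by auto
  have CC: "t = t'" if "t < l" "t' < l" "cw t = cw' t'" for t t'
  proof -
    have a: "Suc t \<le> l" "Suc t' \<le> l" using that by auto
    show ?thesis
      using fac_eq[of "cw t" E "vw t" vx r i t "vw (Suc t)" "vw' t'" t' "vw' (Suc t')"]
        F1[OF that(1)] F2[OF that(2)] that(3) L1[OF a(1)] L1[of t] L2[OF a(2)] L2[of t'] that by auto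
  qed
  have CC1: "t = t'" if "t < l" "t' < l" "cw t = cw t'" for t t'
  proof -
    have a: "Suc t \<le> l" "Suc t' \<le> l" using that by auto
    show ?thesis
      using fac_eq[of "cw t" E "vw t" vx r i t "vw (Suc t)" "vw t'" t' "vw (Suc t')"]
        F1[OF that(1)] F1[OF that(2)] that(3) L1[OF a(1)] L1[of t] L1[OF a(2)] L1[of t'] that by auto
  qed
  have CC2: "t = t'" if "t < l" "t' < l" "cw' t = cw' t'" for t t'
  proof -
    have a: "Suc t \<le> l" "Suc t' \<le> l" using that by auto
    show ?thesis
      using fac_eq[of "cw' t" E "vw' t" vx r i t "vw' (Suc t)" "vw' t'" t' "vw' (Suc t')"]
        F2[OF that(1)] F2[OF that(2)] that(3) L2[OF a(1)] L2[of t] L2[OF a(2)] L2[of t'] that by auto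
  qed
  have CB1: "cw t \<noteq> b" if "t < l" for t
  proof
    assume "cw t = b"
    then show False using fac_b[of b E i vx r "vw (Suc t)" t] b F1[OF that] L1[of "Suc t"] that by auto
  qed
  have CB2: "cw' t \<noteq> b" if "t < l" for t
  proof
    assume "cw' t = b"
    then show False using fac_b[of b E i vx r "vw' (Suc t)" t] b F2[OF that] L2[of "Suc t"] that by auto
  qed
  define p where "p = (LEAST t. vw t = vw' t)"
  have pl: "p \<le> l" unfolding p_def using eq by (rule Least_le)
  have pe: "vw p = vw' p" unfolding p_def using eq by (rule LeastI)
  have pm: "vw t \<noteq> vw' t" if "t < p" for t using not_less_Least[OF that[unfolded p_def]] by simp
  have p0: "p \<noteq> 0" using pe w1(2) w2(2) b(5) by metis
  show False
  proof (cases "\<exists>t<p. cw t = cw' t")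
    case False
    have "\<not> no_short_cycle E vx r (4 * L + 4)"
    proof (rule gen_cycle[of b E "cw' (p - 1)" p cw "p - 1" cw' vw vx r vw'])
      show "b \<in> E" by (rule b(1))
      show "cw' (p - 1) \<in> E" using F2[of "p - 1"] pl p0 by auto
      show "\<forall>t<p. cw t \<in> E" using F1 pl by auto
      show "\<forall>t<p - 1. cw' t \<in> E" using F2 pl by auto
      show "\<forall>t<p. vw t \<in> vset vx r (cw t) \<and> vw (Suc t) \<in> vset vx r (cw t)" using F1 pl by auto
      show "\<forall>t<p - 1. vw' t \<in> vset vx r (cw' t) \<and> vw' (Suc t) \<in> vset vx r (cw' t)" using F2 pl by auto
      show "vw p \<in> vset vx r (cw' (p - 1))" using pe F2[of "p - 1"] pl p0 by auto
      show "vw' (p - 1) \<in> vset vx r (cw' (p - 1))" using F2[of "p - 1"] pl p0 by auto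
      show "vw 0 \<in> vset vx r b" "vw' 0 \<in> vset vx r b" using b w1(2) w2(2) by auto
      show "inj_on vw {..p}" using VV1 pl by (auto simp: inj_on_def)
      show "inj_on vw' {..p - 1}" using VV2 pl by (auto simp: inj_on_def)
      show "\<forall>t\<le>p. \<forall>t'\<le>p - 1. vw t \<noteq> vw' t'"
      proof (intro allI impI)
        fix t t' assume "t \<le> p" "t' \<le> p - 1"
        then show "vw t \<noteq> vw' t'" using VV[of t t'] pm[of t] pl p0 by fastforce
      qed
      show "inj_on cw {..<p}" using CC1 pl by (auto simp: inj_on_def)
      show "inj_on cw' {..<p - 1}" using CC2 pl by (auto simp: inj_on_def)
      show "\<forall>t<p. \<forall>t'<p - 1. cw t \<noteq> cw' t'"
      proof (intro allI impI)
        fix t t' assume tt: "t < p" "t' < p - 1"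
        show "cw t \<noteq> cw' t'" using CC[of t t'] False tt pl by auto
      qed
      show "\<forall>t<p. cw' (p - 1) \<noteq> cw t"
      proof (intro allI impI)
        fix t assume tt: "t < p"
        show "cw' (p - 1) \<noteq> cw t" using CC[of t "p - 1"] False tt pl p0 by auto
      qed
      show "\<forall>t<p - 1. cw' (p - 1) \<noteq> cw' t"
      proof (intro allI impI)
        fix t assume tt: "t < p - 1"
        have "p - 1 < l" "t < l" using tt pl p0 by auto
        then show "cw' (p - 1) \<noteq> cw' t" using CC2[of "p - 1" t] tt by auto
      qed
      show "\<forall>t<p. b \<noteq> cw t" using CB1 pl by (metis less_le_trans)
      show "\<forall>t<p - 1. b \<noteq> cw' t" using CB2 pl by (metis less_le_trans diff_le_self)
      show "cw' (p - 1) \<noteq> b" using CB2 pl p0 by auto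
      show "2 * (p + (p - 1) + 2) < 4 * L + 4" using pl LL p0 by auto
    qed
    then show False using nsc by simp
  next
    case True
    define q where "q = (LEAST t. t < p \<and> cw t = cw' t)"
    have qp: "q < p" "cw q = cw' q" unfolding q_def using LeastI_ex[OF True] by auto
    have qm: "cw t \<noteq> cw' t" if "t < q" for t
      using not_less_Least[OF that[unfolded q_def]] that qp(1) by auto
    have "\<not> no_short_cycle E vx r (4 * L + 4)"
    proof (rule gen_cycle[of b E "cw q" q cw q cw' vw vx r vw'])
      show "b \<in> E" by (rule b(1))
      show "cw q \<in> E" using F1[of q] pl qp by auto
      show "\<forall>t<q. cw t \<in> E" using F1 pl qp by auto
      show "\<forall>t<q. cw' t \<in> E" using F2 pl qp by auto
      show "\<forall>t<q. vw t \<in> vset vx r (cw t) \<and> vw (Suc t) \<in> vset vx r (cw t)" using F1 pl qp by auto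
      show "\<forall>t<q. vw' t \<in> vset vx r (cw' t) \<and> vw' (Suc t) \<in> vset vx r (cw' t)" using F2 pl qp by auto
      show "vw q \<in> vset vx r (cw q)" using F1[of q] pl qp by auto
      show "vw' q \<in> vset vx r (cw q)" using F2[of q] pl qp by auto
      show "vw 0 \<in> vset vx r b" "vw' 0 \<in> vset vx r b" using b w1(2) w2(2) by auto
      show "inj_on vw {..q}" using VV1 pl qp by (auto simp: inj_on_def)
      show "inj_on vw' {..q}" using VV2 pl qp by (auto simp: inj_on_def)
      show "\<forall>t\<le>q. \<forall>t'\<le>q. vw t \<noteq> vw' t'"
      proof (intro allI impI)
        fix t t' assume "t \<le> q" "t' \<le> q"
        then show "vw t \<noteq> vw' t'" using VV[of t t'] pm[of t] pl qp by fastforce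
      qed
      show "inj_on cw {..<q}" using CC1 pl qp by (auto simp: inj_on_def)
      show "inj_on cw' {..<q}" using CC2 pl qp by (auto simp: inj_on_def)
      show "\<forall>t<q. \<forall>t'<q. cw t \<noteq> cw' t'"
      proof (intro allI impI)
        fix t t' assume tt: "t < q" "t' < q"
        show "cw t \<noteq> cw' t'" using CC[of t t'] qm[of t] tt pl qp by auto
      qed
      show "\<forall>t<q. cw q \<noteq> cw t"
      proof (intro allI impI)
        fix t assume tt: "t < q"
        show "cw q \<noteq> cw t" using CC1[of q t] tt pl qp by auto
      qed
      show "\<forall>t<q. cw q \<noteq> cw' t"
      proof (intro allI impI)
        fix t assume tt: "t < q"
        show "cw q \<noteq> cw' t" using CC[of q t] tt pl qp by auto
      qed
      show "\<forall>t<q. b \<noteq> cw t" using CB1 pl qp by (metis less_le_trans less_trans)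
      show "\<forall>t<q. b \<noteq> cw' t" using CB2 pl qp by (metis less_le_trans less_trans)
      show "cw q \<noteq> b" using CB1 pl qp by auto
      show "2 * (q + q + 2) < 4 * L + 4" using pl LL qp by auto
    qed
    then show False using nsc by simp
  qed
qed

lemma Ddep_disj:
  assumes b: "b \<in> E" "i \<in> vset vx r b" "j \<in> vset vx r b" "j' \<in> vset vx r b" "j \<noteq> j'"
    and LL: "l \<le> L" and nsc: "no_short_cycle E vx r (4 * L + 4)"
    and k: "k \<in> Ddep E vx r l j b" "k \<in> Ddep E vx r l j' b"
  shows "Rch E vx r i l k"
proof (rule ccontr)
  assume nR: "\<not> Rch E vx r i l k"
  obtain n vw cw where w: "1 \<le> n" "n \<le> l" "vw 0 = j" "vw n = k" "iswalk E vx r vw cw n"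
    using Ddep_walk[OF k(1)] by blast
  obtain n' vw' cw' where w': "1 \<le> n'" "n' \<le> l" "vw' 0 = j'" "vw' n' = k" "iswalk E vx r vw' cw' n'"
    using Ddep_walk[OF k(2)] by blast
  have g: "n = l" "\<forall>t\<le>n. Rch E vx r i (Suc t) (vw t) \<and> \<not> Rch E vx r i t (vw t)"
    using geod[OF b(1,2,3) w(5,3,2)] nR w(4) by auto
  have g': "n' = l" "\<forall>t\<le>n'. Rch E vx r i (Suc t) (vw' t) \<and> \<not> Rch E vx r i t (vw' t)"
    using geod[OF b(1,2,4) w'(5,3,2)] nR w'(4) by auto
  have "vw l = vw' l" using w(4) w'(4) g(1) g'(1) by simp
  show False
    using two_walks_False[OF b w(5)[unfolded g(1)] w(3) g(2)[unfolded g(1)]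
        w'(5)[unfolded g'(1)] w'(3) g'(2)[unfolded g'(1)] \<open>vw l = vw' l\<close> LL nsc] .
qed

lemma mlderiv_cong:
  assumes "\<And>\<iota>. \<iota> < r \<Longrightarrow> \<iota> \<noteq> p \<Longrightarrow> x \<iota> = y \<iota>"
  shows "mlderiv r f p x = mlderiv r f p y"
  unfolding mlderiv_def
proof (rule sum.cong[OF refl])
  fix S assume "S \<in> {S \<in> Pow {..<r}. p \<in> S}"
  then have "\<forall>\<kappa>\<in>S - {p}. x \<kappa> = y \<kappa>" using assms by auto
  then show "fourier r f S * (\<Prod>\<kappa>\<in>S - {p}. x \<kappa>) = fourier r f S * (\<Prod>\<kappa>\<in>S - {p}. y \<kappa>)"
    by (metis (mono_tags, lifting) prod.cong)
qed

lemma u_of_cong: "h s k c = h' s k c \<Longrightarrow> h (s - 1) k c = h' (s - 1) k c \<Longrightarrow> u_of h s k c = u_of h' s k c"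
  unfolding u_of_def by simp

lemma z_of_cong:
  assumes "\<And>s. s \<le> l \<Longrightarrow> h s k c = h' s k c" "z0 k = z0' k"
  shows "z_of z0 Fto h l k c = z_of z0' Fto h' l k c"
proof -
  have u: "u_of h s k c = u_of h' s k c" if "s \<le> l" for s
    using assms(1)[of s] assms(1)[of "s - 1"] that by (simp add: u_of_def)
  have A: "A_of Fto h (s - 1) k c = A_of Fto h' (s - 1) k c" if "s \<le> l" for s
  proof -
    have "restrict (\<lambda>t. u_of h (t + 1) k c) {..<s - 1} = restrict (\<lambda>t. u_of h' (t + 1) k c) {..<s - 1}"
      using u that by (intro restrict_ext) auto
    then show ?thesis unfolding A_of_def by simp
  qed
  show ?thesis unfolding z_of_def using u A assms(2) by (intro arg_cong2[where f="(+)"] sum.cong) auto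
qed

lemma pos_eq:
  assumes "inj_on (vx c) {..<r}" "\<iota> < r"
  shows "pos vx r c (vx c \<iota>) = \<iota>"
  unfolding pos_def
  using assms by (intro the_equality) (auto simp: inj_on_def)

lemma whist_dep:
  assumes inj: "\<forall>a\<in>E. inj_on (vx a) {..<r}"
  shows "(\<forall>v\<in>Ddep E vx r l j a. \<omega> v = \<omega>' v) \<Longrightarrow> s \<le> l \<Longrightarrow>
     whist r E vx d f Fto \<omega> l s j a = whist r E vx d f Fto \<omega>' l s j a"
proof (induction l arbitrary: j a s)
  case 0 then show ?case by simp
next
  case (Suc l)
  let ?h = "whist r E vx d f Fto \<omega> l" and ?h' = "whist r E vx d f Fto \<omega>' l"
  show ?case
  proof (cases "s \<le> l")
    case True
    then show ?thesis using Suc.IH[of j a s] Suc.prems by (simp add: Let_def)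
  next
    case False
    have eqc: "mlderiv r (\<lambda>x. f x) (pos vx r c j) (\<lambda>\<iota>. z_of \<omega> Fto ?h l (vx c \<iota>) c)
       = mlderiv r (\<lambda>x. f x) (pos vx r c j) (\<lambda>\<iota>. z_of \<omega>' Fto ?h' l (vx c \<iota>) c)"
      if c: "c \<in> fdeg E vx r j - {a}" for c
    proof (rule mlderiv_cong)
      fix \<iota> assume \<iota>: "\<iota> < r" "\<iota> \<noteq> pos vx r c j"
      have cE: "c \<in> E" using c unfolding fdeg_def by auto
      have "vx c \<iota> \<noteq> j" using pos_eq[of vx c r \<iota>, OF inj[rule_format, OF cE] \<iota>(1)] \<iota>(2) by auto
      then have kin: "vx c \<iota> \<in> vset vx r c - {j}" using \<iota>(1) unfolding vset_def by auto
      have sub: "insert (vx c \<iota>) (Ddep E vx r l (vx c \<iota>) c) \<subseteq> Ddep E vx r (Suc l) j a"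
        using c kin by auto
      have agree: "\<forall>v\<in>Ddep E vx r l (vx c \<iota>) c. \<omega> v = \<omega>' v" "\<omega> (vx c \<iota>) = \<omega>' (vx c \<iota>)"
        using sub Suc.prems(1) by auto
      show "z_of \<omega> Fto ?h l (vx c \<iota>) c = z_of \<omega>' Fto ?h' l (vx c \<iota>) c"
        by (rule z_of_cong) (use Suc.IH[OF agree(1)] agree(2) in auto)
    qed
    show ?thesis using False eqc by (simp add: Let_def)
  qed
qed

lemma umsg_dep:
  assumes inj: "\<forall>a\<in>E. inj_on (vx a) {..<r}"
    and ag: "\<forall>v\<in>Ddep E vx r l j b. \<omega> v = \<omega>' v"
  shows "umsg r E vx d f Fto \<omega> l j b = umsg r E vx d f Fto \<omega>' l j b"
  unfolding umsg_def u_of_def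
  using whist_dep[OF inj ag, of l] whist_dep[OF inj ag, of "l - 1"] by simp


definition FSum :: "nat \<Rightarrow> ((nat \<Rightarrow> real) \<Rightarrow> real) \<Rightarrow> real" where
  "FSum r f = (\<Sum>S\<in>Pow {..<r}. \<bar>fourier r f S\<bar>)"

lemma FSum_nonneg: "0 \<le> FSum r f"
  unfolding FSum_def by (simp add: sum_nonneg)

lemma mlderiv_bound:
  assumes Z: "1 \<le> Z" and x: "\<And>\<kappa>. \<bar>x \<kappa>\<bar> \<le> Z"
  shows "\<bar>mlderiv r f p x\<bar> \<le> FSum r f * Z ^ r"
proof -
  have fin: "finite (Pow {..<r})" by simp
  have t: "\<bar>fourier r f S * (\<Prod>\<kappa>\<in>S - {p}. x \<kappa>)\<bar> \<le> \<bar>fourier r f S\<bar> * Z ^ r" if "S \<in> Pow {..<r}" for S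
  proof -
    have fS: "finite (S - {p})" using that finite_subset by auto
    have "\<bar>\<Prod>\<kappa>\<in>S - {p}. x \<kappa>\<bar> = (\<Prod>\<kappa>\<in>S - {p}. \<bar>x \<kappa>\<bar>)" by (simp add: abs_prod)
    also have "\<dots> \<le> (\<Prod>\<kappa>\<in>S - {p}. Z)" by (intro prod_mono) (auto simp: x)
    also have "\<dots> = Z ^ card (S - {p})" by simp
    also have "\<dots> \<le> Z ^ r"
    proof (rule power_increasing[OF _ Z])
      have "card (S - {p}) \<le> card {..<r}" using that by (intro card_mono) auto
      then show "card (S - {p}) \<le> r" by simp
    qed
    finally show ?thesis by (simp add: abs_mult mult_left_mono)
  qed
  have "\<bar>mlderiv r f p x\<bar> \<le> (\<Sum>S\<in>{S \<in> Pow {..<r}. p \<in> S}. \<bar>fourier r f S * (\<Prod>\<kappa>\<in>S - {p}. x \<kappa>)\<bar>)"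
    unfolding mlderiv_def by (rule sum_abs)
  also have "\<dots> \<le> (\<Sum>S\<in>{S \<in> Pow {..<r}. p \<in> S}. \<bar>fourier r f S\<bar> * Z ^ r)"
    by (rule sum_mono) (use t in auto)
  also have "\<dots> \<le> (\<Sum>S\<in>Pow {..<r}. \<bar>fourier r f S\<bar> * Z ^ r)"
    by (rule sum_mono2) (use Z in auto)
  also have "\<dots> = FSum r f * Z ^ r" unfolding FSum_def by (simp add: sum_distrib_right)
  finally show ?thesis .
qed

lemma whist_bound:
  fixes vx :: "'a \<Rightarrow> nat \<Rightarrow> 'v"
  assumes Fb: "\<forall>k<L. \<forall>y. \<bar>Fto k y\<bar> \<le> K" and K: "0 \<le> K" and finE: "finite E" and r1: "1 \<le> r"
  shows "l \<le> L \<Longrightarrow> \<exists>C e. 1 \<le> C \<and> 1 \<le> e \<and> (\<forall>\<omega> R. 1 \<le> R \<longrightarrow> (\<forall>v. \<bar>\<omega> v\<bar> \<le> R) \<longrightarrow>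
     (\<forall>s j a. \<bar>whist r E vx d f Fto \<omega> l s j a\<bar> \<le> C * R ^ e))"
proof (induction l)
  case 0
  show ?case by (rule exI[of _ 1], rule exI[of _ 1]) auto
next
  case (Suc l)
  then obtain C e where Ce: "1 \<le> C" "1 \<le> e" and
    bd: "\<And>\<omega> R s j a. 1 \<le> R \<Longrightarrow> (\<forall>v. \<bar>\<omega> v\<bar> \<le> R) \<Longrightarrow> \<bar>whist r E vx d f Fto \<omega> l s j a\<bar> \<le> C * R ^ e"
    by auto
  have lL: "l < L" using Suc.prems by simp
  define c0 where "c0 = \<bar>1 / sqrt (real d - 1)\<bar> * real (card E) * FSum r f"
  have c0: "0 \<le> c0" unfolding c0_def using FSum_nonneg by simp
  define C' where "C' = max C (c0 * (1 + 2 * real l * K * C) ^ r)"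
  define e' where "e' = e * r"
  have C'1: "1 \<le> C'" using Ce unfolding C'_def by simp
  have e'1: "1 \<le> e'" using Ce r1 unfolding e'_def by simp
  show ?case
  proof (intro exI[of _ C'] exI[of _ e'] conjI C'1 e'1 allI impI)
    fix \<omega> :: "'v \<Rightarrow> real" and R :: real and s j a
    assume R: "1 \<le> R" and \<omega>: "\<forall>v. \<bar>\<omega> v\<bar> \<le> R"
    let ?h = "whist r E vx d f Fto \<omega> l"
    have Re: "R ^ e \<le> R ^ e'" using R Ce r1 unfolding e'_def by (intro power_increasing) auto
    have R1e: "1 \<le> R ^ e" using R by simp
    have RRe: "R \<le> R ^ e" using R Ce by (metis power_increasing power_one_right)
    show "\<bar>whist r E vx d f Fto \<omega> (Suc l) s j a\<bar> \<le> C' * R ^ e'"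
    proof (cases "s \<le> l")
      case True
      have "\<bar>whist r E vx d f Fto \<omega> (Suc l) s j a\<bar> = \<bar>?h s j a\<bar>" using True by (simp add: Let_def)
      also have "\<dots> \<le> C * R ^ e" by (rule bd[OF R \<omega>])
      also have "\<dots> \<le> C' * R ^ e'" using Re Ce R1e unfolding C'_def by (intro mult_mono) auto
      finally show ?thesis .
    next
      case False
      define Z where "Z = (1 + 2 * real l * K * C) * R ^ e"
      have h1: "1 \<le> 1 + 2 * real l * K * C" using K Ce by simp
      have h0: "0 \<le> 1 + 2 * real l * K * C" using h1 by linarith
      have Z1: "1 \<le> Z" unfolding Z_def using mult_mono[OF h1 R1e h0] by simp
      have ub: "\<bar>u_of ?h s' k c\<bar> \<le> 2 * C * R ^ e" for s' k c
        using bd[OF R \<omega>, of s' k c] bd[OF R \<omega>, of "s' - 1" k c] unfolding u_of_def by linarith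
      have zb: "\<bar>z_of \<omega> Fto ?h l k c\<bar> \<le> Z" for k c
      proof -
        have "\<bar>z_of \<omega> Fto ?h l k c\<bar> \<le> \<bar>\<omega> k\<bar> + \<bar>\<Sum>t\<in>{1..l}. A_of Fto ?h (t - 1) k c * u_of ?h t k c\<bar>"
          unfolding z_of_def by (rule abs_triangle_ineq)
        also have "\<dots> \<le> R + (\<Sum>t\<in>{1..l}. K * (2 * C * R ^ e))"
        proof (rule add_mono)
          show "\<bar>\<omega> k\<bar> \<le> R" using \<omega> by auto
          have "\<bar>\<Sum>t\<in>{1..l}. A_of Fto ?h (t - 1) k c * u_of ?h t k c\<bar> \<le> (\<Sum>t\<in>{1..l}. \<bar>A_of Fto ?h (t - 1) k c * u_of ?h t k c\<bar>)"
            by (rule sum_abs)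
          also have "\<dots> \<le> (\<Sum>t\<in>{1..l}. K * (2 * C * R ^ e))"
          proof (rule sum_mono)
            fix t assume t: "t \<in> {1..l}"
            have "t - 1 < L" using t lL by auto
            then have "\<bar>A_of Fto ?h (t - 1) k c\<bar> \<le> K" using Fb unfolding A_of_def by auto
            then show "\<bar>A_of Fto ?h (t - 1) k c * u_of ?h t k c\<bar> \<le> K * (2 * C * R ^ e)"
              unfolding abs_mult by (intro mult_mono ub) auto
          qed
          finally show "\<bar>\<Sum>t\<in>{1..l}. A_of Fto ?h (t - 1) k c * u_of ?h t k c\<bar> \<le> (\<Sum>t\<in>{1..l}. K * (2 * C * R ^ e))" .
        qed
        also have "\<dots> = R + real l * K * (2 * C * R ^ e)" by simp
        also have "\<dots> \<le> Z" unfolding Z_def using RRe by (simp add: algebra_simps)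
        finally show ?thesis .
      qed
      have "\<bar>whist r E vx d f Fto \<omega> (Suc l) s j a\<bar> =
          \<bar>1 / sqrt (real d - 1)\<bar> * \<bar>\<Sum>c\<in>fdeg E vx r j - {a}. mlderiv r (\<lambda>x. f x) (pos vx r c j) (\<lambda>\<iota>. z_of \<omega> Fto ?h l (vx c \<iota>) c)\<bar>"
        using False by (simp add: Let_def abs_mult)
      also have "\<dots> \<le> \<bar>1 / sqrt (real d - 1)\<bar> * (real (card E) * (FSum r f * Z ^ r))"
      proof (rule mult_left_mono)
        have fE: "fdeg E vx r j - {a} \<subseteq> E" unfolding fdeg_def by auto
        have "\<bar>\<Sum>c\<in>fdeg E vx r j - {a}. mlderiv r (\<lambda>x. f x) (pos vx r c j) (\<lambda>\<iota>. z_of \<omega> Fto ?h l (vx c \<iota>) c)\<bar>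
            \<le> (\<Sum>c\<in>fdeg E vx r j - {a}. \<bar>mlderiv r (\<lambda>x. f x) (pos vx r c j) (\<lambda>\<iota>. z_of \<omega> Fto ?h l (vx c \<iota>) c)\<bar>)"
          by (rule sum_abs)
        also have "\<dots> \<le> (\<Sum>c\<in>fdeg E vx r j - {a}. FSum r f * Z ^ r)"
          by (rule sum_mono) (rule mlderiv_bound[OF Z1 zb])
        also have "\<dots> = real (card (fdeg E vx r j - {a})) * (FSum r f * Z ^ r)" by simp
        also have "\<dots> \<le> real (card E) * (FSum r f * Z ^ r)"
          using card_mono[OF finE fE] FSum_nonneg Z1 by (intro mult_right_mono) auto
        finally show "\<bar>\<Sum>c\<in>fdeg E vx r j - {a}. mlderiv r (\<lambda>x. f x) (pos vx r c j) (\<lambda>\<iota>. z_of \<omega> Fto ?h l (vx c \<iota>) c)\<bar>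
            \<le> real (card E) * (FSum r f * Z ^ r)" .
      qed simp
      also have "\<dots> = c0 * (1 + 2 * real l * K * C) ^ r * R ^ e'"
      proof -
        have Zr: "Z ^ r = (1 + 2 * real l * K * C) ^ r * R ^ e'"
          unfolding Z_def e'_def by (simp add: power_mult_distrib power_mult)
        show ?thesis unfolding Zr c0_def by (simp add: ac_simps)
      qed
      also have "\<dots> \<le> C' * R ^ e'" unfolding C'_def using R by (intro mult_right_mono) auto
      finally show ?thesis .
    qed
  qed
qed


locale gsetup =
  fixes N :: "real measure" and V :: "'v set" and B :: "'v set"
  assumes N: "prob_space N" and sN: "sets N = sets borel" and finV: "finite V" and BV: "B \<subseteq> V"
begin

abbreviation "MM \<equiv> PiM V (\<lambda>_. N)"
abbreviation "GG \<equiv> gen_sigma MM B"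
abbreviation "WW \<equiv> V - B"

definition "gens = {(\<lambda>\<omega>. \<omega> j) -` A \<inter> space MM | j A. j \<in> B \<and> A \<in> sets borel}"

lemma meas_N_borel: "measurable X N = measurable X borel"
  by (rule measurable_cong_sets) (auto simp: sN)

lemma coord_meas: "j \<in> V \<Longrightarrow> (\<lambda>\<omega>. \<omega> j) \<in> borel_measurable MM"
proof -
  assume "j \<in> V"
  then have "(\<lambda>\<omega>. \<omega> j) \<in> measurable MM N" by (rule measurable_component_singleton)
  then show ?thesis using meas_N_borel[of MM] by simp
qed

lemma gens_sub: "gens \<subseteq> sets MM"
proof
  fix S assume "S \<in> gens"
  then obtain j A where S: "S = (\<lambda>\<omega>. \<omega> j) -` A \<inter> space MM" "j \<in> B" "A \<in> sets borel"
    unfolding gens_def by auto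
  have "j \<in> V" using S(2) BV by auto
  then show "S \<in> sets MM" using S coord_meas measurable_sets by blast
qed

lemma gens_Pow: "gens \<subseteq> Pow (space MM)"
  unfolding gens_def by auto

lemma GG_eq: "GG = sigma (space MM) gens"
  unfolding gen_sigma_def gens_def by simp

lemma space_GG: "space GG = space MM"
  unfolding GG_eq by (simp add: space_measure_of_conv)

lemma sets_GG: "sets GG = sigma_sets (space MM) gens"
  unfolding GG_eq using gens_Pow by (simp add: sets_measure_of)

lemma subalg: "subalgebra MM GG"
  unfolding subalgebra_def space_GG sets_GG
  using sets.sigma_sets_subset[OF gens_sub] by simp

lemma coord_meas_G: "j \<in> B \<Longrightarrow> (\<lambda>\<omega>. \<omega> j) \<in> borel_measurable GG"
proof (rule measurableI)
  fix A :: "real set" assume "j \<in> B" "A \<in> sets borel"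
  then have "(\<lambda>\<omega>. \<omega> j) -` A \<inter> space MM \<in> gens" unfolding gens_def by blast
  then show "(\<lambda>\<omega>. \<omega> j) -` A \<inter> space GG \<in> sets GG" unfolding sets_GG space_GG by auto
qed auto

lemma restr_meas_G: "(\<lambda>\<omega>. restrict \<omega> B) \<in> measurable GG (PiM B (\<lambda>_. N))"
proof (rule measurable_restrict)
  fix j assume "j \<in> B"
  then have "(\<lambda>\<omega>. \<omega> j) \<in> borel_measurable GG" by (rule coord_meas_G)
  then show "(\<lambda>\<omega>. \<omega> j) \<in> measurable GG N" using meas_N_borel[of GG] by simp
qed

lemma restr_meas: "(\<lambda>\<omega>. restrict \<omega> B) \<in> measurable MM (PiM B (\<lambda>_. N))"
  using measurable_from_subalg[OF subalg restr_meas_G] .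

lemma GG_char:
  assumes "A \<in> sets GG"
  shows "\<exists>A'\<in>sets (PiM B (\<lambda>_. N)). A = (\<lambda>\<omega>. restrict \<omega> B) -` A' \<inter> space MM"
proof -
  let ?VA = "vimage_algebra (space MM) (\<lambda>\<omega>. restrict \<omega> B) (PiM B (\<lambda>_. N))"
  have fn1: "(\<lambda>\<omega>. restrict \<omega> B) \<in> space MM \<rightarrow> space (PiM B (\<lambda>_. N))"
    using measurable_space[OF restr_meas] by (rule funcsetI)
  have "gens \<subseteq> sets ?VA"
  proof
    fix S assume "S \<in> gens"
    then obtain j A where S: "S = (\<lambda>\<omega>. \<omega> j) -` A \<inter> space MM" "j \<in> B" "A \<in> sets borel"
      unfolding gens_def by auto
    let ?A' = "{x \<in> space (PiM B (\<lambda>_. N)). x j \<in> A}"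
    have "(\<lambda>x. x j) \<in> measurable (PiM B (\<lambda>_. N)) N" using S(2) by (rule measurable_component_singleton)
    then have "(\<lambda>x. x j) \<in> borel_measurable (PiM B (\<lambda>_. N))" using meas_N_borel[of "PiM B (\<lambda>_. N)"] by simp
    from measurable_sets[OF this S(3)]
    have "?A' \<in> sets (PiM B (\<lambda>_. N))" by (simp add: vimage_def Int_def conj_commute)
    moreover have "S = (\<lambda>\<omega>. restrict \<omega> B) -` ?A' \<inter> space MM"
    proof
      show "S \<subseteq> (\<lambda>\<omega>. restrict \<omega> B) -` ?A' \<inter> space MM"
      proof
        fix \<omega> assume "\<omega> \<in> S"
        then have "\<omega> \<in> space MM" "\<omega> j \<in> A" using S(1) by auto
        moreover have "restrict \<omega> B \<in> space (PiM B (\<lambda>_. N))" using fn1 \<open>\<omega> \<in> space MM\<close> by blast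
        ultimately show "\<omega> \<in> (\<lambda>\<omega>. restrict \<omega> B) -` ?A' \<inter> space MM" using S(2) by simp
      qed
      show "(\<lambda>\<omega>. restrict \<omega> B) -` ?A' \<inter> space MM \<subseteq> S" using S(1,2) by auto
    qed
    ultimately show "S \<in> sets ?VA" unfolding sets_vimage_algebra2[OF fn1] by blast
  qed
  then have "sigma_sets (space ?VA) gens \<subseteq> sets ?VA" by (rule sets.sigma_sets_subset)
  then have "sets GG \<subseteq> sets ?VA" unfolding sets_GG by simp
  then show ?thesis using assms unfolding sets_vimage_algebra2[OF fn1] by auto
qed

lemma prodN: "product_prob_space (\<lambda>_::'v. N)"
  unfolding product_prob_space_def product_prob_space_axioms_def product_sigma_finite_def
  using N prob_space_imp_sigma_finite by auto

lemma probM: "prob_space MM" by (rule prob_space_PiM) (rule N)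

lemma probB: "prob_space (PiM X (\<lambda>_::'v. N))" by (rule prob_space_PiM) (rule N)

lemma VW: "B \<union> WW = V" using BV by auto

lemma mm: "merge B WW \<in> measurable (PiM B (\<lambda>_. N) \<Otimes>\<^sub>M PiM WW (\<lambda>_. N)) MM"
  using measurable_merge[of B WW "\<lambda>_. N"] VW by simp

lemma dM: "distr (PiM B (\<lambda>_. N) \<Otimes>\<^sub>M PiM WW (\<lambda>_. N)) MM (merge B WW) = MM"
proof -
  interpret P: product_prob_space "\<lambda>_::'v. N" V by (rule prodN)
  have "finite B" "finite WW" using finV BV finite_subset by auto
  from P.distr_merge[OF _ this] VW show ?thesis by simp
qed

lemma dR: "PiM B (\<lambda>_. N) = distr MM (PiM B (\<lambda>_. N)) (\<lambda>\<omega>. restrict \<omega> B)"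
proof -
  interpret P: product_prob_space "\<lambda>_::'v. N" V by (rule prodN)
  show ?thesis by (rule P.distr_restrict[OF BV finV])
qed

lemma restr_merge: "x \<in> space (PiM B (\<lambda>_. N)) \<Longrightarrow> restrict (merge B WW (x, y)) B = x"
  by (auto simp: space_PiM merge_def restrict_def PiE_def extensional_def fun_eq_iff)

lemma restr_sp: "x \<in> space (PiM B (\<lambda>_. N)) \<Longrightarrow> restrict x B = x"
  by (auto simp: space_PiM PiE_def extensional_def fun_eq_iff)

lemma spN: "space N = UNIV" using sets_eq_imp_space_eq[OF sN] by simp

lemma merge_space: "x \<in> space (PiM B (\<lambda>_. N)) \<Longrightarrow> merge B WW (x, y) \<in> space MM"
  using BV by (auto simp: space_PiM merge_def PiE_def extensional_def spN)

lemma CE: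
  assumes g: "integrable MM g"
  shows "AE \<omega> in MM. real_cond_exp MM GG g \<omega> = (\<integral>y. g (merge B WW (\<omega>, y)) \<partial>PiM WW (\<lambda>_. N))"
proof -
  interpret P: product_prob_space "\<lambda>_::'v. N" V by (rule prodN)
  interpret PM: prob_space MM by (rule probM)
  have fms: "finite_measure_subalgebra MM GG"
    unfolding finite_measure_subalgebra_def finite_measure_subalgebra_axioms_def
    using subalg prob_space.emeasure_space_1[OF probM] by (auto intro!: finite_measureI)
  interpret S: finite_measure_subalgebra MM GG by (rule fms)
  interpret PP: pair_sigma_finite "PiM B (\<lambda>_. N)" "PiM WW (\<lambda>_. N)"
    unfolding pair_sigma_finite_def using probB prob_space_imp_sigma_finite by blast
  define \<Phi> where "\<Phi> x = (\<integral>y. g (merge B WW (x, y)) \<partial>PiM WW (\<lambda>_. N))" for x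
  have gm: "g \<in> borel_measurable MM" using g by auto
  have gpair: "integrable (PiM B (\<lambda>_. N) \<Otimes>\<^sub>M PiM WW (\<lambda>_. N)) (\<lambda>p. g (merge B WW p))"
    using integrable_distr_eq[OF mm gm] dM g by simp
  have \<Phi>int: "integrable (PiM B (\<lambda>_. N)) \<Phi>"
    using PP.integrable_fst'[OF gpair] unfolding \<Phi>_def by simp
  have \<Phi>m: "\<Phi> \<in> borel_measurable (PiM B (\<lambda>_. N))" using \<Phi>int by auto
  have eqR: "(\<integral>y. g (merge B WW (\<omega>, y)) \<partial>PiM WW (\<lambda>_. N)) = \<Phi> (restrict \<omega> B)" for \<omega>
    unfolding \<Phi>_def by simp
  have "AE \<omega> in MM. real_cond_exp MM GG g \<omega> = \<Phi> (restrict \<omega> B)"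
  proof (rule S.real_cond_exp_charact)
    show "integrable MM g" by (rule g)
    have "integrable (distr MM (PiM B (\<lambda>_. N)) (\<lambda>\<omega>. restrict \<omega> B)) \<Phi>" using \<Phi>int dR by simp
    then show "integrable MM (\<lambda>\<omega>. \<Phi> (restrict \<omega> B))"
      using integrable_distr_eq[OF restr_meas \<Phi>m] by simp
    show "(\<lambda>\<omega>. \<Phi> (restrict \<omega> B)) \<in> borel_measurable GG"
      using measurable_compose[OF restr_meas_G \<Phi>m] .
    fix A assume A: "A \<in> sets GG"
    obtain A' where A': "A' \<in> sets (PiM B (\<lambda>_. N))" "A = (\<lambda>\<omega>. restrict \<omega> B) -` A' \<inter> space MM"
      using GG_char[OF A] by blast
    have AM: "A \<in> sets MM" using A subalg unfolding subalgebra_def by auto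
    have ind: "indicator A \<omega> = (indicator A' (restrict \<omega> B) :: real)" if "\<omega> \<in> space MM" for \<omega>
      using that A'(2) by (simp add: indicator_def)
    have hm: "(\<lambda>x. indicator A' x * \<Phi> x) \<in> borel_measurable (PiM B (\<lambda>_. N))"
      using A'(1) \<Phi>m by measurable
    have f_int: "integrable MM (\<lambda>\<omega>. indicator A' (restrict \<omega> B) * g \<omega>)"
    proof -
      have "integrable MM (\<lambda>\<omega>. indicator A \<omega> *\<^sub>R g \<omega>)" by (rule integrable_mult_indicator[OF AM g])
      moreover have "integrable MM (\<lambda>\<omega>. indicator A \<omega> *\<^sub>R g \<omega>) \<longleftrightarrow> integrable MM (\<lambda>\<omega>. indicator A' (restrict \<omega> B) * g \<omega>)"
        by (rule Bochner_Integration.integrable_cong) (auto simp: ind)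
      ultimately show ?thesis by simp
    qed
    have "(\<integral>\<omega>\<in>A. g \<omega> \<partial>MM) = (\<integral>\<omega>. indicator A' (restrict \<omega> B) * g \<omega> \<partial>MM)"
      unfolding set_lebesgue_integral_def by (rule Bochner_Integration.integral_cong) (auto simp: ind)
    also have "\<dots> = (\<integral>x. (\<integral>y. indicator A' (restrict (merge B WW (x, y)) B) * g (merge B WW (x, y)) \<partial>PiM WW (\<lambda>_. N)) \<partial>PiM B (\<lambda>_. N))"
    proof -
      have "finite B" "finite WW" using finV BV finite_subset by auto
      from P.product_integral_fold[OF _ this, of "\<lambda>\<omega>. indicator A' (restrict \<omega> B) * g \<omega>"] f_int VW
      show ?thesis by simp
    qed
    also have "\<dots> = (\<integral>x. indicator A' x * \<Phi> x \<partial>PiM B (\<lambda>_. N))"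
      by (rule Bochner_Integration.integral_cong) (auto simp: restr_merge restr_sp \<Phi>_def)
    also have "\<dots> = (\<integral>\<omega>. indicator A' (restrict \<omega> B) * \<Phi> (restrict \<omega> B) \<partial>MM)"
      using integral_distr[OF restr_meas hm] dR by simp
    also have "\<dots> = (\<integral>\<omega>\<in>A. \<Phi> (restrict \<omega> B) \<partial>MM)"
      unfolding set_lebesgue_integral_def by (rule Bochner_Integration.integral_cong) (auto simp: ind)
    finally show "(\<integral>\<omega>\<in>A. g \<omega> \<partial>MM) = (\<integral>\<omega>\<in>A. \<Phi> (restrict \<omega> B) \<partial>MM)" .
  qed
  then show ?thesis by (simp add: eqR)
qed

lemma coordS: "(\<lambda>y. y i) \<in> measurable (PiM S (\<lambda>_::'v. N)) N"
proof (cases "i \<in> S")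
  case True then show ?thesis by (rule measurable_component_singleton)
next
  case False
  have "(\<lambda>y. undefined) \<in> measurable (PiM S (\<lambda>_::'v. N)) N" by (simp add: spN)
  moreover have "\<And>y. y \<in> space (PiM S (\<lambda>_::'v. N)) \<Longrightarrow> y i = undefined"
    using False by (auto simp: space_PiM PiE_def extensional_def)
  ultimately show ?thesis using measurable_cong[of "PiM S (\<lambda>_::'v. N)" "\<lambda>y. y i" "\<lambda>y. undefined" N] by simp
qed

lemma merge_space': "merge B WW (x, y) \<in> space MM"
  using BV by (auto simp: space_PiM merge_def PiE_def extensional_def spN)

lemma merge_meas: "(\<lambda>z. merge B WW (x, z)) \<in> measurable (PiM S (\<lambda>_::'v. N)) MM"
proof -
  have "(\<lambda>z i. merge B WW (x, z) i) \<in> measurable (PiM S (\<lambda>_::'v. N)) MM"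
  proof (rule measurable_PiM_single')
    fix i assume "i \<in> V"
    show "(\<lambda>z. merge B WW (x, z) i) \<in> measurable (PiM S (\<lambda>_::'v. N)) N"
      unfolding merge_def using coordS[of i S] by (auto simp: spN)
  next
    show "(\<lambda>z i. merge B WW (x, z) i) \<in> space (PiM S (\<lambda>_. N)) \<rightarrow> (\<Pi>\<^sub>E i\<in>V. space N)"
      using merge_space' by (auto simp: space_PiM)
  qed
  then show ?thesis by simp
qed

lemma ind_coord: "prob_space.indep_vars (PiM WW (\<lambda>_. N)) (\<lambda>_. N) (\<lambda>i y. y i) WW"
proof -
  interpret PW: prob_space "PiM WW (\<lambda>_::'v. N)" by (rule probB)
  show ?thesis
  proof (cases "WW = {}")
    case True
    have "prob_space.indep_vars (PiM {} (\<lambda>_::'v. N)) (\<lambda>_. N) (\<lambda>i y. y i) {}"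
      unfolding prob_space.indep_vars_def[OF probB[of "{}"]] prob_space.indep_sets_def[OF probB[of "{}"]] by simp
    then show ?thesis by (simp only: True)
  next
    case False
    have rv: "\<And>i. (\<lambda>y. y i) \<in> measurable (PiM WW (\<lambda>_::'v. N)) N" by (rule coordS)
    have l: "distr (PiM WW (\<lambda>_. N)) (PiM WW (\<lambda>_. N)) (\<lambda>y. \<lambda>i\<in>WW. y i) = PiM WW (\<lambda>_. N)"
    proof -
      have "distr (PiM WW (\<lambda>_. N)) (PiM WW (\<lambda>_. N)) (\<lambda>y. \<lambda>i\<in>WW. y i)
          = distr (PiM WW (\<lambda>_. N)) (PiM WW (\<lambda>_. N)) (\<lambda>y. y)"
        by (rule distr_cong) (auto simp: space_PiM PiE_def extensional_def restrict_def fun_eq_iff)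
      then show ?thesis by simp
    qed
    have r: "PiM WW (\<lambda>i. distr (PiM WW (\<lambda>_. N)) N (\<lambda>y. y i)) = PiM WW (\<lambda>_. N)"
      by (rule PiM_cong) (auto intro!: distr_PiM_component N)
    show ?thesis using PW.indep_vars_iff_distr_eq_PiM[OF False rv] l r by simp
  qed
qed

lemma sect_prod:
  fixes J :: "'j set" and C :: "'j \<Rightarrow> 'v set" and X :: "'j \<Rightarrow> ('v \<Rightarrow> real) \<Rightarrow> real"
  assumes finJ: "finite J" and CW: "\<And>j. j \<in> J \<Longrightarrow> C j \<subseteq> WW" and dj: "disjoint_family_on C J"
    and Xm: "\<And>j. j \<in> J \<Longrightarrow> X j \<in> borel_measurable MM"
    and dep: "\<And>j \<omega> \<omega>'. j \<in> J \<Longrightarrow> \<omega> \<in> space MM \<Longrightarrow> \<omega>' \<in> space MM \<Longrightarrow>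
       (\<forall>v\<in>B \<union> C j. \<omega> v = \<omega>' v) \<Longrightarrow> X j \<omega> = X j \<omega>'"
    and sint: "\<forall>j\<in>J. integrable (PiM WW (\<lambda>_. N)) (\<lambda>y. X j (merge B WW (x, y)))"
  shows "(\<integral>y. (\<Prod>j\<in>J. X j (merge B WW (x, y))) \<partial>PiM WW (\<lambda>_. N))
     = (\<Prod>j\<in>J. \<integral>y. X j (merge B WW (x, y)) \<partial>PiM WW (\<lambda>_. N))"
proof -
  interpret PW: prob_space "PiM WW (\<lambda>_::'v. N)" by (rule probB)
  define h where "h j z = X j (merge B WW (x, z))" for j z
  have Yeq: "X j (merge B WW (x, y)) = h j (restrict y (C j))" if "j \<in> J" for j y
  proof -
    have "\<forall>v\<in>B \<union> C j. merge B WW (x, y) v = merge B WW (x, restrict y (C j)) v"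
      using CW[OF that] by (auto simp: merge_def)
    then show ?thesis unfolding h_def using dep[OF that merge_space' merge_space'] by blast
  qed
  have hm: "h j \<in> measurable (PiM (C j) (\<lambda>_. N)) borel" if "j \<in> J" for j
    unfolding h_def using measurable_compose[OF merge_meas Xm[OF that]] .
  have ir: "PW.indep_vars (\<lambda>j. PiM (C j) (\<lambda>_. N)) (\<lambda>j y. restrict (\<lambda>i. y i) (C j)) J"
    by (rule PW.indep_vars_restrict[OF ind_coord CW dj])
  have ind: "PW.indep_vars (\<lambda>_. borel) (\<lambda>j y. h j (restrict y (C j))) J"
    using PW.indep_vars_compose2[OF ir, of h "\<lambda>_. borel"] hm by simp
  have hint: "integrable (PiM WW (\<lambda>_. N)) (\<lambda>y. h j (restrict y (C j)))" if "j \<in> J" for j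
    using sint that Yeq by simp
  have "(\<integral>y. (\<Prod>j\<in>J. X j (merge B WW (x, y))) \<partial>PiM WW (\<lambda>_. N))
      = (\<integral>y. (\<Prod>j\<in>J. h j (restrict y (C j))) \<partial>PiM WW (\<lambda>_. N))"
    using Yeq by simp
  also have "\<dots> = (\<Prod>j\<in>J. \<integral>y. h j (restrict y (C j)) \<partial>PiM WW (\<lambda>_. N))"
    by (rule PW.indep_vars_lebesgue_integral[OF finJ ind hint])
  also have "\<dots> = (\<Prod>j\<in>J. \<integral>y. X j (merge B WW (x, y)) \<partial>PiM WW (\<lambda>_. N))"
    using Yeq by simp
  finally show ?thesis .
qed

lemma ABS:
  fixes J :: "'j set" and C :: "'j \<Rightarrow> 'v set" and X :: "'j \<Rightarrow> ('v \<Rightarrow> real) \<Rightarrow> real"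
  assumes finJ: "finite J" and CW: "\<And>j. j \<in> J \<Longrightarrow> C j \<subseteq> WW" and dj: "disjoint_family_on C J"
    and Xint: "\<And>j. j \<in> J \<Longrightarrow> integrable MM (X j)"
    and Pint: "integrable MM (\<lambda>\<omega>. \<Prod>j\<in>J. X j \<omega>)"
    and dep: "\<And>j \<omega> \<omega>'. j \<in> J \<Longrightarrow> \<omega> \<in> space MM \<Longrightarrow> \<omega>' \<in> space MM \<Longrightarrow>
       (\<forall>v\<in>B \<union> C j. \<omega> v = \<omega>' v) \<Longrightarrow> X j \<omega> = X j \<omega>'"
  shows "AE \<omega> in MM. real_cond_exp MM GG (\<lambda>\<omega>. \<Prod>j\<in>J. X j \<omega>) \<omega> = (\<Prod>j\<in>J. real_cond_exp MM GG (X j) \<omega>)"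
proof -
  interpret PP: pair_sigma_finite "PiM B (\<lambda>_. N)" "PiM WW (\<lambda>_. N)"
    unfolding pair_sigma_finite_def using probB prob_space_imp_sigma_finite by blast
  have Xm: "X j \<in> borel_measurable MM" if "j \<in> J" for j using Xint[OF that] by auto
  have gpair: "integrable (PiM B (\<lambda>_. N) \<Otimes>\<^sub>M PiM WW (\<lambda>_. N)) (\<lambda>p. X j (merge B WW p))" if "j \<in> J" for j
    using integrable_distr_eq[OF mm Xm[OF that]] dM Xint[OF that] by simp
  have AEsec: "AE x in PiM B (\<lambda>_. N). \<forall>j\<in>J. integrable (PiM WW (\<lambda>_. N)) (\<lambda>y. X j (merge B WW (x, y)))"
    by (rule AE_finite_allI[OF finJ]) (use PP.AE_integrable_fst'[OF gpair] in simp)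
  let ?Q = "\<lambda>x. (\<integral>y. (\<Prod>j\<in>J. X j (merge B WW (x, y))) \<partial>PiM WW (\<lambda>_. N))
     = (\<Prod>j\<in>J. \<integral>y. X j (merge B WW (x, y)) \<partial>PiM WW (\<lambda>_. N))"
  have AEQ: "AE x in PiM B (\<lambda>_. N). ?Q x"
    using AEsec by eventually_elim (rule sect_prod[OF finJ CW dj Xm dep])
  then have "AE x in distr MM (PiM B (\<lambda>_. N)) (\<lambda>\<omega>. restrict \<omega> B). ?Q x"
    by (subst dR[symmetric])
  from AE_distrD[OF restr_meas this]
  have AEQ': "AE \<omega> in MM. ?Q \<omega>" by simp
  have c1: "AE \<omega> in MM. real_cond_exp MM GG (\<lambda>\<omega>. \<Prod>j\<in>J. X j \<omega>) \<omega>
       = (\<integral>y. (\<Prod>j\<in>J. X j (merge B WW (\<omega>, y))) \<partial>PiM WW (\<lambda>_. N))"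
    by (rule CE[OF Pint])
  have c2: "AE \<omega> in MM. \<forall>j\<in>J. real_cond_exp MM GG (X j) \<omega>
       = (\<integral>y. X j (merge B WW (\<omega>, y)) \<partial>PiM WW (\<lambda>_. N))"
    by (rule AE_finite_allI[OF finJ]) (rule CE[OF Xint])
  from c1 c2 AEQ' show ?thesis by eventually_elim simp
qed

lemma coordM: "(\<lambda>\<omega>. \<omega> i) \<in> borel_measurable MM"
  using coordS[of i V] meas_N_borel[of MM] by simp

lemma one_plus_sum_le_prod:
  fixes a :: "'x \<Rightarrow> real"
  assumes "finite S" "\<And>v. v \<in> S \<Longrightarrow> 0 \<le> a v"
  shows "1 + (\<Sum>v\<in>S. a v) \<le> (\<Prod>v\<in>S. 1 + a v)"
  using assms
proof (induction S rule: finite_induct)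
  case empty then show ?case by simp
next
  case (insert x S)
  have p1: "1 \<le> (\<Prod>v\<in>S. 1 + a v)" using insert by (intro prod_ge_1) auto
  have ax: "0 \<le> a x" using insert by auto
  have "1 + (\<Sum>v\<in>insert x S. a v) = a x + (1 + (\<Sum>v\<in>S. a v))" using insert by simp
  also have "\<dots> \<le> a x * (\<Prod>v\<in>S. 1 + a v) + (\<Prod>v\<in>S. 1 + a v)"
  proof (rule add_mono)
    show "a x \<le> a x * (\<Prod>v\<in>S. 1 + a v)" using mult_left_mono[OF p1 ax] by simp
    show "1 + (\<Sum>v\<in>S. a v) \<le> (\<Prod>v\<in>S. 1 + a v)" using insert by auto
  qed
  also have "\<dots> = (\<Prod>v\<in>insert x S. 1 + a v)" using insert by (simp add: algebra_simps)
  finally show ?case .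
qed

lemma nrm_int:
  assumes Nint: "\<And>q. integrable N (\<lambda>t. (1 + \<bar>t\<bar>) ^ q)" and c: "1 \<le> c"
  shows "integrable MM (\<lambda>\<omega>. (c + (\<Sum>v\<in>V. \<bar>\<omega> v\<bar>)) ^ q)"
proof -
  interpret P: product_prob_space "\<lambda>_::'v. N" V by (rule prodN)
  have pi: "integrable MM (\<lambda>\<omega>. \<Prod>v\<in>V. (1 + \<bar>\<omega> v\<bar>) ^ q)"
    using P.product_integrable_prod[OF finV, of "\<lambda>_ t. (1 + \<bar>t\<bar>) ^ q"] Nint by simp
  then have pi2: "integrable MM (\<lambda>\<omega>. c ^ q * (\<Prod>v\<in>V. (1 + \<bar>\<omega> v\<bar>) ^ q))" by simp
  show ?thesis
  proof (rule Bochner_Integration.integrable_bound[OF pi2])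
    show "(\<lambda>\<omega>. (c + (\<Sum>v\<in>V. \<bar>\<omega> v\<bar>)) ^ q) \<in> borel_measurable MM"
      using coordM by measurable
    show "AE \<omega> in MM. norm ((c + (\<Sum>v\<in>V. \<bar>\<omega> v\<bar>)) ^ q) \<le> norm (c ^ q * (\<Prod>v\<in>V. (1 + \<bar>\<omega> v\<bar>) ^ q))"
    proof (rule AE_I2)
      fix \<omega> :: "'v \<Rightarrow> real"
      have s0: "0 \<le> (\<Sum>v\<in>V. \<bar>\<omega> v\<bar>)" by (simp add: sum_nonneg)
      have "c + (\<Sum>v\<in>V. \<bar>\<omega> v\<bar>) \<le> c * (1 + (\<Sum>v\<in>V. \<bar>\<omega> v\<bar>))"
      proof -
        have "(\<Sum>v\<in>V. \<bar>\<omega> v\<bar>) \<le> c * (\<Sum>v\<in>V. \<bar>\<omega> v\<bar>)" using mult_right_mono[OF c s0] by simp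
        then show ?thesis by (simp add: algebra_simps)
      qed
      also have "\<dots> \<le> c * (\<Prod>v\<in>V. 1 + \<bar>\<omega> v\<bar>)"
        using c by (intro mult_left_mono one_plus_sum_le_prod finV) auto
      finally have le: "c + (\<Sum>v\<in>V. \<bar>\<omega> v\<bar>) \<le> c * (\<Prod>v\<in>V. 1 + \<bar>\<omega> v\<bar>)" .
      have nn: "0 \<le> c + (\<Sum>v\<in>V. \<bar>\<omega> v\<bar>)" using c s0 by simp
      have "(c + (\<Sum>v\<in>V. \<bar>\<omega> v\<bar>)) ^ q \<le> (c * (\<Prod>v\<in>V. 1 + \<bar>\<omega> v\<bar>)) ^ q"
        by (rule power_mono[OF le nn])
      also have "\<dots> = c ^ q * (\<Prod>v\<in>V. (1 + \<bar>\<omega> v\<bar>) ^ q)"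
        by (simp add: power_mult_distrib prod_power_distrib)
      finally show "norm ((c + (\<Sum>v\<in>V. \<bar>\<omega> v\<bar>)) ^ q) \<le> norm (c ^ q * (\<Prod>v\<in>V. (1 + \<bar>\<omega> v\<bar>) ^ q))"
        using nn c by (simp add: prod_nonneg)
    qed
  qed
qed

lemma int_by_poly:
  assumes Nint: "\<And>q. integrable N (\<lambda>t. (1 + \<bar>t\<bar>) ^ q)" and c: "1 \<le> c"
    and gm: "g \<in> borel_measurable MM"
    and gb: "\<And>\<omega>. \<omega> \<in> space MM \<Longrightarrow> \<bar>g \<omega>\<bar> \<le> A * (c + (\<Sum>v\<in>V. \<bar>\<omega> v\<bar>)) ^ q"
  shows "integrable MM g"
proof (rule Bochner_Integration.integrable_bound[OF _ gm])
  show "integrable MM (\<lambda>\<omega>. A * (c + (\<Sum>v\<in>V. \<bar>\<omega> v\<bar>)) ^ q)"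
    using nrm_int[OF Nint c, of q] by simp
  show "AE \<omega> in MM. norm (g \<omega>) \<le> norm (A * (c + (\<Sum>v\<in>V. \<bar>\<omega> v\<bar>)) ^ q)"
    by (rule AE_I2) (use gb in force)
qed

lemma mlderiv_meas:
  assumes "\<And>\<kappa>. (\<lambda>\<omega>. x \<omega> \<kappa>) \<in> borel_measurable X"
  shows "(\<lambda>\<omega>. mlderiv r f p (x \<omega>)) \<in> borel_measurable X"
  unfolding mlderiv_def using assms by measurable

lemma whist_meas:
  assumes Fm: "\<forall>k<L. Fto k \<in> borel_measurable (PiM {..<k} (\<lambda>_. borel))"
  shows "l \<le> L \<Longrightarrow> (\<lambda>\<omega>. whist r E vx d f Fto \<omega> l s j a) \<in> borel_measurable MM"
proof (induction l arbitrary: s j a)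
  case 0 then show ?case by simp
next
  case (Suc l)
  have lL: "l < L" using Suc.prems by simp
  have IH: "\<And>s j a. (\<lambda>\<omega>. whist r E vx d f Fto \<omega> l s j a) \<in> borel_measurable MM"
    using Suc.IH Suc.prems by simp
  have um: "(\<lambda>\<omega>. u_of (whist r E vx d f Fto \<omega> l) t k c) \<in> borel_measurable MM" for t k c
    unfolding u_of_def using IH by measurable
  have Am: "(\<lambda>\<omega>. A_of Fto (whist r E vx d f Fto \<omega> l) (t - 1) k c) \<in> borel_measurable MM"
    if "t \<in> {1..l}" for t k c
  proof -
    have tL: "t - 1 < L" using that lL by auto
    have "(\<lambda>\<omega>. restrict (\<lambda>m. u_of (whist r E vx d f Fto \<omega> l) (m + 1) k c) {..<t - 1})
        \<in> measurable MM (PiM {..<t - 1} (\<lambda>_. borel))"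
      by (rule measurable_restrict) (rule um)
    from measurable_compose[OF this Fm[rule_format, OF tL]] show ?thesis unfolding A_of_def .
  qed
  have zm: "(\<lambda>\<omega>. z_of \<omega> Fto (whist r E vx d f Fto \<omega> l) l k c) \<in> borel_measurable MM" for k c
    unfolding z_of_def
    by (intro borel_measurable_add borel_measurable_sum borel_measurable_times coordM Am um) auto
  show ?case
  proof (cases "s \<le> l")
    case True
    then show ?thesis using IH[of s j a] by (simp add: Let_def)
  next
    case False
    have "(\<lambda>\<omega>. 1 / sqrt (real d - 1) * (\<Sum>c\<in>fdeg E vx r j - {a}.
        mlderiv r (\<lambda>x. f x) (pos vx r c j) (\<lambda>\<iota>. z_of \<omega> Fto (whist r E vx d f Fto \<omega> l) l (vx c \<iota>) c)))
        \<in> borel_measurable MM"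
      by (intro borel_measurable_times borel_measurable_const borel_measurable_sum mlderiv_meas zm)
    then show ?thesis using False by (simp add: Let_def)
  qed
qed

end


lemma gauss_Nint:
  assumes \<sigma>: "0 < \<sigma>"
  shows "integrable (density lborel (normal_density 0 \<sigma>)) (\<lambda>t. (1 + \<bar>t\<bar>) ^ q)"
proof -
  have m1: "(\<lambda>t::real. (1 + \<bar>t\<bar>) ^ q) \<in> borel_measurable lborel" by measurable
  have i1: "integrable lborel (\<lambda>x. normal_density 0 \<sigma> x * \<bar>x - 0\<bar> ^ q)"
    by (rule integrable_normal_moment_abs[OF \<sigma>])
  have i2: "integrable lborel (\<lambda>x. 2 ^ q * (normal_density 0 \<sigma> x + normal_density 0 \<sigma> x * \<bar>x\<bar> ^ q))"
    using i1 integrable_normal_density[OF \<sigma>] by (intro integrable_mult_right Bochner_Integration.integrable_add) auto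
  have "integrable lborel (\<lambda>x. normal_density 0 \<sigma> x *\<^sub>R (1 + \<bar>x\<bar>) ^ q)"
  proof (rule Bochner_Integration.integrable_bound[OF i2])
    show "(\<lambda>x. normal_density 0 \<sigma> x *\<^sub>R (1 + \<bar>x\<bar>) ^ q) \<in> borel_measurable lborel" by measurable
    show "AE x in lborel. norm (normal_density 0 \<sigma> x *\<^sub>R (1 + \<bar>x\<bar>) ^ q)
        \<le> norm (2 ^ q * (normal_density 0 \<sigma> x + normal_density 0 \<sigma> x * \<bar>x\<bar> ^ q))"
    proof (rule AE_I2)
      fix x :: real
      have nd: "0 \<le> normal_density 0 \<sigma> x" by simp
      have key: "(1 + \<bar>x\<bar>) ^ q \<le> 2 ^ q * (1 + \<bar>x\<bar> ^ q)"
      proof (cases "\<bar>x\<bar> \<le> 1")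
        case True
        have "(1 + \<bar>x\<bar>) ^ q \<le> 2 ^ q" using True by (intro power_mono) auto
        also have "\<dots> \<le> 2 ^ q * (1 + \<bar>x\<bar> ^ q)" by simp
        finally show ?thesis .
      next
        case False
        have "(1 + \<bar>x\<bar>) ^ q \<le> (2 * \<bar>x\<bar>) ^ q" using False by (intro power_mono) auto
        also have "\<dots> = 2 ^ q * \<bar>x\<bar> ^ q" by (simp add: power_mult_distrib)
        also have "\<dots> \<le> 2 ^ q * (1 + \<bar>x\<bar> ^ q)" by simp
        finally show ?thesis .
      qed
      have "normal_density 0 \<sigma> x * (1 + \<bar>x\<bar>) ^ q \<le> normal_density 0 \<sigma> x * (2 ^ q * (1 + \<bar>x\<bar> ^ q))"
        by (rule mult_left_mono[OF key nd])
      then show "norm (normal_density 0 \<sigma> x *\<^sub>R (1 + \<bar>x\<bar>) ^ q)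
        \<le> norm (2 ^ q * (normal_density 0 \<sigma> x + normal_density 0 \<sigma> x * \<bar>x\<bar> ^ q))"
        using nd by (simp add: algebra_simps abs_mult)
    qed
  qed
  then show ?thesis by (subst integrable_density) (auto simp: m1)
qed

theorem mainTheorem6:
  fixes r d L :: nat and \<delta> K :: real
    and f :: "(nat \<Rightarrow> real) \<Rightarrow> real"
    and V :: "'v set" and E :: "'a set" and vx :: "'a \<Rightarrow> nat \<Rightarrow> 'v"
    and Fto Fv :: "nat \<Rightarrow> (nat \<Rightarrow> real) \<Rightarrow> real"
    and i :: 'v and b :: 'a and l :: nat and s :: "'v \<Rightarrow> nat"
  assumes r2: "2 \<le> r"
    and f_pred: "\<forall>x\<in>cube r. f x \<in> {0, 1}"
    and f_deg1: "\<forall>\<iota><r. fourier r f {\<iota>} = 0"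
    and delta_pos: "0 < \<delta>"
    and L_def: "L = nat \<lfloor>1 / \<delta>\<rfloor>"
    and V_fin: "finite V" and E_fin: "finite E"
    and edges: "\<forall>a\<in>E. inj_on (vx a) {..<r} \<and> vset vx r a \<subseteq> V"
    and deg: "\<forall>j\<in>V. card (fdeg E vx r j) = d"
    and idx_reg: "\<forall>j\<in>V. \<forall>\<iota><r. card {a\<in>E. vx a \<iota> = j} * r = d"
    and girth: "no_short_cycle E vx r (4 * L + 4)"
    and K_pos: "0 < K"
    and Fto_bd: "\<forall>k<L. \<forall>y. \<bar>Fto k y\<bar> \<le> K"
    and Fto_meas: "\<forall>k<L. Fto k \<in> borel_measurable (\<Pi>\<^sub>M \<kappa>\<in>{..<k}. borel)"
    and Fv_bd: "\<forall>k<L. \<forall>y. \<bar>Fv k y\<bar> \<le> K"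
    and Fv_meas: "\<forall>k<L. Fv k \<in> borel_measurable (\<Pi>\<^sub>M \<kappa>\<in>{..<k}. borel)"
    and i_V: "i \<in> V"
    and b_i: "b \<in> fdeg E vx r i"
    and l_bds: "1 \<le> l" "l \<le> L"
  shows "AE \<omega> in gauss_space V \<delta>.
     real_cond_exp (gauss_space V \<delta>) (gen_sigma (gauss_space V \<delta>) (vball V E vx r i l))
       (\<lambda>\<omega>. \<Prod>j\<in>vset vx r b - {i}. (umsg r E vx d f Fto \<omega> l j b) ^ s j) \<omega>
   = (\<Prod>j\<in>vset vx r b - {i}.
       real_cond_exp (gauss_space V \<delta>) (gen_sigma (gauss_space V \<delta>) (vball V E vx r i l))
         (\<lambda>\<omega>. (umsg r E vx d f Fto \<omega> l j b) ^ s j) \<omega>)"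
proof -
  define \<sigma> where "\<sigma> = sqrt \<delta>"
  have \<sigma>: "0 < \<sigma>" unfolding \<sigma>_def using delta_pos by simp
  define N where "N = density lborel (normal_density 0 \<sigma>)"
  have gs: "gauss_space V \<delta> = PiM V (\<lambda>_. N)" unfolding gauss_space_def N_def \<sigma>_def ..
  define B where "B = vball V E vx r i l"
  have BV: "B \<subseteq> V" unfolding B_def vball_def by auto
  have probN: "prob_space N" unfolding N_def by (rule prob_space_normal_density[OF \<sigma>])
  have sN: "sets N = sets borel" unfolding N_def by simp
  interpret gsetup N V B by (rule gsetup.intro[OF probN sN V_fin BV])
  have Nint: "\<And>q. integrable N (\<lambda>t. (1 + \<bar>t\<bar>) ^ q)" unfolding N_def by (rule gauss_Nint[OF \<sigma>])
  have bE: "b \<in> E" and ib: "i \<in> vset vx r b" using b_i unfolding fdeg_def by auto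
  have inj: "\<forall>a\<in>E. inj_on (vx a) {..<r}" and vsV: "\<forall>a\<in>E. vset vx r a \<subseteq> V" using edges by auto
  define J where "J = vset vx r b - {i}"
  define C where "C j = Ddep E vx r l j b - B" for j
  define X where "X j = (\<lambda>\<omega>. umsg r E vx d f Fto \<omega> l j b ^ s j)" for j
  have finJ: "finite J" unfolding J_def vset_def by simp
  have CW: "C j \<subseteq> V - B" for j unfolding C_def using Ddep_V[OF vsV] by auto
  have dj: "disjoint_family_on C J"
    unfolding disjoint_family_on_def
  proof (intro ballI impI)
    fix j j' assume jj: "j \<in> J" "j' \<in> J" "j \<noteq> j'"
    show "C j \<inter> C j' = {}"
    proof (rule ccontr)
      assume "C j \<inter> C j' \<noteq> {}"
      then obtain k where k: "k \<in> Ddep E vx r l j b" "k \<in> Ddep E vx r l j' b" "k \<notin> B"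
        unfolding C_def by auto
      have "Rch E vx r i l k"
        by (rule Ddep_disj[OF bE ib _ _ jj(3) l_bds(2) girth k(1,2)]) (use jj in \<open>auto simp: J_def\<close>)
      moreover have "k \<in> V" using Ddep_V[OF vsV] k(1) by auto
      ultimately have "k \<in> B" unfolding B_def vball_def Rch_def by auto
      then show False using k(3) by simp
    qed
  qed
  have wm: "\<And>t j a. (\<lambda>\<omega>. whist r E vx d f Fto \<omega> l t j a) \<in> borel_measurable MM"
    by (rule whist_meas[OF Fto_meas l_bds(2)])
  have um: "(\<lambda>\<omega>. umsg r E vx d f Fto \<omega> l j b) \<in> borel_measurable MM" for j
    unfolding umsg_def u_of_def using wm by measurable
  have K0: "0 \<le> K" using K_pos by simp
  have r1: "1 \<le> r" using r2 by simp
  obtain C0 e0 where Ce: "1 \<le> C0" "1 \<le> e0" and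
    wb0: "\<forall>\<omega> R. 1 \<le> R \<longrightarrow> (\<forall>v. \<bar>\<omega> v\<bar> \<le> R) \<longrightarrow> (\<forall>t j a. \<bar>whist r E vx d f Fto \<omega> l t j a\<bar> \<le> C0 * R ^ e0)"
    using whist_bound[OF Fto_bd K0 E_fin r1 l_bds(2), of vx d f] by blast
  have wb: "\<bar>whist r E vx d f Fto \<omega> l t j a\<bar> \<le> C0 * R ^ e0"
    if "1 \<le> R" "\<forall>v. \<bar>\<omega> v\<bar> \<le> R" for \<omega> R t j a
    using wb0 that by blast
  define c where "c = 1 + \<bar>undefined :: real\<bar>"
  have c1: "1 \<le> c" unfolding c_def by simp
  define R where "R \<omega> = c + (\<Sum>v\<in>V. \<bar>\<omega> v\<bar>)" for \<omega> :: "'v \<Rightarrow> real"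
  have R1: "1 \<le> R \<omega>" for \<omega> unfolding R_def using c1 by (simp add: sum_nonneg add_increasing2)
  have Rb: "\<forall>v. \<bar>\<omega> v\<bar> \<le> R \<omega>" if "\<omega> \<in> space MM" for \<omega>
  proof
    fix v
    show "\<bar>\<omega> v\<bar> \<le> R \<omega>"
    proof (cases "v \<in> V")
      case True
      have "\<bar>\<omega> v\<bar> \<le> (\<Sum>v\<in>V. \<bar>\<omega> v\<bar>)" using True V_fin by (intro member_le_sum) auto
      then show ?thesis unfolding R_def using c1 by simp
    next
      case False
      then have "\<omega> v = undefined" using that by (auto simp: space_PiM PiE_def extensional_def)
      then show ?thesis unfolding R_def c_def by (simp add: sum_nonneg add_increasing2)
    qed
  qed
  have ub: "\<bar>umsg r E vx d f Fto \<omega> l j b\<bar> \<le> 2 * C0 * R \<omega> ^ e0" if "\<omega> \<in> space MM" for \<omega> j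
    using wb[OF R1 Rb[OF that], of l j b] wb[OF R1 Rb[OF that], of "l - 1" j b]
    unfolding umsg_def u_of_def by linarith
  have Xb: "\<bar>X j \<omega>\<bar> \<le> (2 * C0) ^ s j * R \<omega> ^ (e0 * s j)" if "\<omega> \<in> space MM" for \<omega> j
  proof -
    have "\<bar>X j \<omega>\<bar> = \<bar>umsg r E vx d f Fto \<omega> l j b\<bar> ^ s j" unfolding X_def by (simp add: power_abs)
    also have "\<dots> \<le> (2 * C0 * R \<omega> ^ e0) ^ s j" by (rule power_mono[OF ub[OF that]]) simp
    also have "\<dots> = (2 * C0) ^ s j * R \<omega> ^ (e0 * s j)" by (simp add: power_mult_distrib power_mult)
    finally show ?thesis .
  qed
  have Xm: "X j \<in> borel_measurable MM" for j unfolding X_def using um by measurable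
  have Xint: "integrable MM (X j)" for j
    by (rule int_by_poly[OF Nint c1 Xm]) (use Xb in \<open>simp add: R_def\<close>)
  have Pint: "integrable MM (\<lambda>\<omega>. \<Prod>j\<in>J. X j \<omega>)"
  proof (rule int_by_poly[OF Nint c1])
    show "(\<lambda>\<omega>. \<Prod>j\<in>J. X j \<omega>) \<in> borel_measurable MM" using Xm by measurable
    fix \<omega> assume \<omega>: "\<omega> \<in> space MM"
    have "\<bar>\<Prod>j\<in>J. X j \<omega>\<bar> = (\<Prod>j\<in>J. \<bar>X j \<omega>\<bar>)" by (simp add: abs_prod)
    also have "\<dots> \<le> (\<Prod>j\<in>J. (2 * C0) ^ s j * R \<omega> ^ (e0 * s j))"
      by (intro prod_mono) (use Xb[OF \<omega>] in auto)
    also have "\<dots> = (\<Prod>j\<in>J. (2 * C0) ^ s j) * R \<omega> ^ (\<Sum>j\<in>J. e0 * s j)"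
      by (simp add: prod.distrib power_sum)
    finally show "\<bar>\<Prod>j\<in>J. X j \<omega>\<bar> \<le> (\<Prod>j\<in>J. (2 * C0) ^ s j) * (c + (\<Sum>v\<in>V. \<bar>\<omega> v\<bar>)) ^ (\<Sum>j\<in>J. e0 * s j)"
      unfolding R_def .
  qed
  have dep: "X j \<omega> = X j \<omega>'" if "j \<in> J" "\<omega> \<in> space MM" "\<omega>' \<in> space MM"
    "\<forall>v\<in>B \<union> C j. \<omega> v = \<omega>' v" for j \<omega> \<omega>'
  proof -
    have "\<forall>v\<in>Ddep E vx r l j b. \<omega> v = \<omega>' v" using that(4) unfolding C_def by auto
    then have "umsg r E vx d f Fto \<omega> l j b = umsg r E vx d f Fto \<omega>' l j b" by (rule umsg_dep[OF inj])
    then show ?thesis unfolding X_def by simp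
  qed
  have "AE \<omega> in MM. real_cond_exp MM GG (\<lambda>\<omega>. \<Prod>j\<in>J. X j \<omega>) \<omega> = (\<Prod>j\<in>J. real_cond_exp MM GG (X j) \<omega>)"
    by (rule ABS[OF finJ CW dj Xint Pint dep])
  then show ?thesis unfolding gs B_def J_def X_def .
qed

end
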